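(* Let $Z$ be a continuous-time Markov chain on $\mathbb Z^d_{\ge 0}$ associated with a finite set of reactions $\bar y_u\to\bar y'_u$, where $\bar y_u,\bar y'_u\in\mathbb Z^d_{\ge0}$. The chain jumps from $x$ to $x+\bar y'_u-\bar y_u$ with mass-action intensity $\bar\lambda_u(x)=\bar\kappa_u x^{(\bar y_u)}$, where $\bar\kappa_u>0$, and starts at a fixed state $Z(0)=z^0_\ell$. Assume that $Z$ is irreducible and admits a stationary distribution $\pi$ with $$\sum_{x\in\mathbb Z^d_{\ge0}}\sum_u\bar\lambda_u(x)^2\pi(x)<\infty.$$ Let $J(t)$ be the number of jumps of $Z$ in $[0,t]$. Then there exists a constant $c$ such that $E(J(t)^2)\le c\max\{1,t^2\}$ for all $t\ge 0$.
   Context: Notation: $x^{(y)}=\prod_i x_i^{(y_i)}$, where $n^{(k)}=n(n-1)\cdots(n-k+1)$ when $n\ge k$ and $n^{(k)}=0$ otherwise. *)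

theory Defs
  imports "HOL-Probability.Probability"
begin

text \<open>Falling factorial n^(k) = n(n-1)...(n-k+1), which is 0 when n < k.\<close>
definition ffall :: "nat \<Rightarrow> nat \<Rightarrow> real" where
  "ffall n k = (\<Prod>i<k. real n - real i)"

definition ma_rate :: "('u \<Rightarrow> real) \<Rightarrow> ('u \<Rightarrow> 'd::finite \<Rightarrow> nat) \<Rightarrow> 'u \<Rightarrow> ('d \<Rightarrow> nat) \<Rightarrow> real" where
  "ma_rate \<kappa> y u x = \<kappa> u * (\<Prod>i\<in>UNIV. ffall (x i) (y u i))"

definition moving :: "'u set \<Rightarrow> ('u \<Rightarrow> 'd::finite \<Rightarrow> nat) \<Rightarrow> ('u \<Rightarrow> 'd \<Rightarrow> nat) \<Rightarrow> 'u set" where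
  "moving U y y' = {u\<in>U. y u \<noteq> y' u}"

definition total_rate :: "'u set \<Rightarrow> ('u \<Rightarrow> real) \<Rightarrow> ('u \<Rightarrow> 'd::finite \<Rightarrow> nat) \<Rightarrow> ('u \<Rightarrow> 'd \<Rightarrow> nat)
    \<Rightarrow> ('d \<Rightarrow> nat) \<Rightarrow> real" where
  "total_rate U \<kappa> y y' x = (\<Sum>u\<in>moving U y y'. ma_rate \<kappa> y u x)"

definition react_step :: "'u set \<Rightarrow> ('u \<Rightarrow> real) \<Rightarrow> ('u \<Rightarrow> 'd::finite \<Rightarrow> nat) \<Rightarrow> ('u \<Rightarrow> 'd \<Rightarrow> nat)
    \<Rightarrow> ('d \<Rightarrow> nat) \<Rightarrow> ('d \<Rightarrow> nat) \<Rightarrow> bool" where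
  "react_step U \<kappa> y y' x x' =
     (\<exists>u\<in>moving U y y'. ma_rate \<kappa> y u x > 0 \<and> x' = (\<lambda>i. x i - y u i + y' u i))"

definition jump_prob :: "'u set \<Rightarrow> ('u \<Rightarrow> real) \<Rightarrow> ('u \<Rightarrow> 'd::finite \<Rightarrow> nat) \<Rightarrow> ('u \<Rightarrow> 'd \<Rightarrow> nat)
    \<Rightarrow> ('d \<Rightarrow> nat) \<Rightarrow> ('d \<Rightarrow> nat) \<Rightarrow> real" where
  "jump_prob U \<kappa> y y' x x' =
     (if total_rate U \<kappa> y y' x = 0 then (if x' = x then 1 else 0)
      else (\<Sum>u\<in>{u\<in>moving U y y'. (\<lambda>i. x i - y u i + y' u i) = x'}. ma_rate \<kappa> y u x)
           / total_rate U \<kappa> y y' x)"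

text \<open>pi is a stationary distribution supported on S (global balance pi Q = 0).\<close>
definition ctmc_stationary :: "'u set \<Rightarrow> ('u \<Rightarrow> real) \<Rightarrow> ('u \<Rightarrow> 'd::finite \<Rightarrow> nat) \<Rightarrow> ('u \<Rightarrow> 'd \<Rightarrow> nat)
    \<Rightarrow> ('d \<Rightarrow> nat) set \<Rightarrow> (('d \<Rightarrow> nat) \<Rightarrow> real) \<Rightarrow> bool" where
  "ctmc_stationary U \<kappa> y y' S \<pi> =
     ((\<forall>x. 0 \<le> \<pi> x) \<and> (\<forall>x. x \<notin> S \<longrightarrow> \<pi> x = 0) \<and> (\<pi> has_sum 1) UNIV \<and>
      (\<forall>x. \<pi> x * total_rate U \<kappa> y y' x =
         (\<Sum>u\<in>moving U y y'. if (\<forall>i. y' u i \<le> x i)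
            then \<pi> (\<lambda>i. x i - y' u i + y u i) * ma_rate \<kappa> y u (\<lambda>i. x i - y' u i + y u i)
            else 0)))"

text \<open>Jump-chain / holding-time description of the CTMC started at z0:
  Y n is the state after the n-th jump, H n the holding time in Y n (possibly infinite).\<close>
definition ctmc_jump_hold :: "'w measure \<Rightarrow> 'u set \<Rightarrow> ('u \<Rightarrow> real) \<Rightarrow> ('u \<Rightarrow> 'd::finite \<Rightarrow> nat)
    \<Rightarrow> ('u \<Rightarrow> 'd \<Rightarrow> nat) \<Rightarrow> ('d \<Rightarrow> nat) \<Rightarrow> (nat \<Rightarrow> 'w \<Rightarrow> ('d \<Rightarrow> nat)) \<Rightarrow> (nat \<Rightarrow> 'w \<Rightarrow> ennreal) \<Rightarrow> bool" where
  "ctmc_jump_hold M U \<kappa> y y' z0 Y H =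
     ((\<forall>n. Y n \<in> measurable M (count_space UNIV)) \<and> (\<forall>n. H n \<in> borel_measurable M) \<and>
      (\<forall>n x s. (\<forall>i. 0 \<le> s i) \<longrightarrow>
         measure M {\<omega>\<in>space M. (\<forall>i\<le>n. Y i \<omega> = x i) \<and> (\<forall>i\<le>n. ennreal (s i) < H i \<omega>)}
         = (if x 0 = z0 then 1 else 0)
           * (\<Prod>i<n. jump_prob U \<kappa> y y' (x i) (x (Suc i)))
           * (\<Prod>i\<le>n. exp (- total_rate U \<kappa> y y' (x i) * s i))))"

text \<open>J(t): number of jumps in [0,t]; the (n+1)-st jump time is H 0 + ... + H n.\<close>
definition num_jumps :: "(nat \<Rightarrow> 'w \<Rightarrow> ennreal) \<Rightarrow> real \<Rightarrow> 'w \<Rightarrow> ennreal" where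
  "num_jumps H t \<omega> = (\<Sum>n. if (\<Sum>i\<le>n. H i \<omega>) \<le> ennreal t then 1 else 0)"

end

theory Submission
  imports Defs "HOL-Real_Asymp.Real_Asymp"
begin

abbreviation SS :: "('a::countable \<Rightarrow> ennreal) \<Rightarrow> ennreal" where
  "SS f \<equiv> \<integral>\<^sup>+x. f x \<partial>count_space UNIV"

lemma SS_swap:
  fixes f :: "'a::countable \<Rightarrow> 'b::countable \<Rightarrow> ennreal"
  shows "SS (\<lambda>x. SS (\<lambda>y. f x y)) = SS (\<lambda>y. SS (\<lambda>x. f x y))"
  by (rule nn_integral_count_space_nn_integral) auto

lemma suminf_swap_ennreal:
  fixes f :: "nat \<Rightarrow> nat \<Rightarrow> ennreal"
  shows "(\<Sum>i. \<Sum>j. f i j) = (\<Sum>j. \<Sum>i. f i j)"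
  using SS_swap[of f] by (simp add: nn_integral_count_space_nat)

locale kern =
  fixes K :: "'a::countable \<Rightarrow> 'a \<Rightarrow> ennreal" and \<pi> w qe d g :: "'a \<Rightarrow> ennreal" and \<theta> :: real
  assumes th: "\<theta> > 0"
    and H1: "\<And>x'. SS (\<lambda>x. w x * K x x') = \<pi> x' * qe x'"
    and H2: "\<And>x. w x = \<pi> x * qe x + ennreal \<theta> * \<pi> x"
    and H3: "\<And>x. ennreal \<theta> * d x + g x = 1"
    and H4: "\<And>x. g x = d x * qe x"
    and H5: "\<And>x. w x * d x = \<pi> x"
    and H6: "\<And>x. SS (\<lambda>x'. K x x') = g x"
begin

definition Kop :: "('a \<Rightarrow> ennreal) \<Rightarrow> 'a \<Rightarrow> ennreal" where
  "Kop f x = SS (\<lambda>x'. K x x' * f x')"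

definition Kp :: "nat \<Rightarrow> ('a \<Rightarrow> ennreal) \<Rightarrow> 'a \<Rightarrow> ennreal" where
  "Kp n = Kop ^^ n"

lemma Kp_0[simp]: "Kp 0 f = f" by (simp add: Kp_def)
lemma Kp_Suc: "Kp (Suc n) f = Kop (Kp n f)" by (simp add: Kp_def)
lemma Kp_Suc': "Kp (Suc n) f = Kp n (Kop f)" unfolding Kp_def funpow_Suc_right by simp
lemma Kp_add_n: "Kp (m + n) f = Kp m (Kp n f)" by (simp add: Kp_def funpow_add)

lemma Kop_mono: "(\<And>x. f x \<le> h x) \<Longrightarrow> Kop f x \<le> Kop h x"
  unfolding Kop_def by (intro nn_integral_mono mult_left_mono) auto

lemma Kop_add: "Kop (\<lambda>x. f x + h x) x = Kop f x + Kop h x"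
  unfolding Kop_def by (simp add: distrib_left nn_integral_add)

lemma Kop_cmult: "Kop (\<lambda>x. c * f x) x = c * Kop f x"
  unfolding Kop_def
  by (simp add: nn_integral_cmult[symmetric] mult.assoc mult.left_commute)

lemma Kop_suminf: "Kop (\<lambda>x. \<Sum>i. f i x) x = (\<Sum>i. Kop (f i) x)"
  unfolding Kop_def
  by (simp add: nn_integral_suminf[symmetric])

lemma Kop_sum: "Kop (\<lambda>y. \<Sum>j\<in>A. f j y) x = (\<Sum>j\<in>A. Kop (f j) x)"
  unfolding Kop_def by (simp add: sum_distrib_left nn_integral_sum)

lemma Kp_mono: "(\<And>x. f x \<le> h x) \<Longrightarrow> Kp n f x \<le> Kp n h x"
  by (induction n arbitrary: x) (auto simp: Kp_Suc intro!: Kop_mono)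

lemma Kp_add: "Kp n (\<lambda>x. f x + h x) x = Kp n f x + Kp n h x"
proof (induction n arbitrary: x)
  case (Suc n)
  have "Kp n (\<lambda>x. f x + h x) = (\<lambda>x. Kp n f x + Kp n h x)" using Suc by auto
  then show ?case by (simp add: Kp_Suc Kop_add)
qed simp

lemma Kp_cmult: "Kp n (\<lambda>x. c * f x) x = c * Kp n f x"
proof (induction n arbitrary: x)
  case (Suc n)
  have "Kp n (\<lambda>x. c * f x) = (\<lambda>x. c * Kp n f x)" using Suc by auto
  then show ?case by (simp add: Kp_Suc Kop_cmult)
qed simp

lemma Kp_suminf: "Kp n (\<lambda>x. \<Sum>i. f i x) x = (\<Sum>i. Kp n (f i) x)"
proof (induction n arbitrary: x)
  case (Suc n)
  have "Kp n (\<lambda>x. \<Sum>i. f i x) = (\<lambda>x. \<Sum>i. Kp n (f i) x)" using Suc by auto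
  then show ?case by (simp add: Kp_Suc Kop_suminf)
qed simp

lemma W: "SS (\<lambda>x. w x * Kop f x) = SS (\<lambda>x. \<pi> x * qe x * f x)"
proof -
  have "SS (\<lambda>x. w x * Kop f x) = SS (\<lambda>x. SS (\<lambda>x'. w x * K x x' * f x'))"
    unfolding Kop_def by (simp add: nn_integral_cmult[symmetric] mult.assoc)
  also have "\<dots> = SS (\<lambda>x'. SS (\<lambda>x. w x * K x x' * f x'))" by (rule SS_swap)
  also have "\<dots> = SS (\<lambda>x'. SS (\<lambda>x. w x * K x x') * f x')"
    by (simp add: nn_integral_multc)
  also have "\<dots> = SS (\<lambda>x. \<pi> x * qe x * f x)" by (simp add: H1)
  finally show ?thesis .
qed

lemma Sub: "ennreal \<theta> * (\<Sum>m\<le>N. SS (\<lambda>x. \<pi> x * Kp m f x)) \<le> SS (\<lambda>x. w x * f x)"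
proof (induction N arbitrary: f)
  case 0
  have "ennreal \<theta> * SS (\<lambda>x. \<pi> x * f x) = SS (\<lambda>x. ennreal \<theta> * \<pi> x * f x)"
    by (simp add: nn_integral_cmult[symmetric] mult.assoc)
  also have "\<dots> \<le> SS (\<lambda>x. w x * f x)"
    by (intro nn_integral_mono mult_right_mono) (auto simp: H2)
  finally show ?case by simp
next
  case (Suc N)
  have "(\<Sum>m\<le>Suc N. SS (\<lambda>x. \<pi> x * Kp m f x))
      = SS (\<lambda>x. \<pi> x * f x) + (\<Sum>m\<le>N. SS (\<lambda>x. \<pi> x * Kp m (Kop f) x))"
    unfolding sum.atMost_Suc_shift by (simp only: Kp_Suc' Kp_0)
  then have "ennreal \<theta> * (\<Sum>m\<le>Suc N. SS (\<lambda>x. \<pi> x * Kp m f x))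
      = ennreal \<theta> * SS (\<lambda>x. \<pi> x * f x) + ennreal \<theta> * (\<Sum>m\<le>N. SS (\<lambda>x. \<pi> x * Kp m (Kop f) x))"
    by (simp add: distrib_left)
  also have "\<dots> \<le> ennreal \<theta> * SS (\<lambda>x. \<pi> x * f x) + SS (\<lambda>x. w x * Kop f x)"
    using Suc.IH[of "Kop f"] by (intro add_left_mono)
  also have "\<dots> = SS (\<lambda>x. ennreal \<theta> * \<pi> x * f x) + SS (\<lambda>x. \<pi> x * qe x * f x)"
    by (simp add: W nn_integral_cmult[symmetric] mult.assoc)
  also have "\<dots> = SS (\<lambda>x. w x * f x)"
    by (simp add: H2 nn_integral_add[symmetric] distrib_right add.commute)
  finally show ?case .
qed

lemma SubInf: "ennreal \<theta> * (\<Sum>m. SS (\<lambda>x. \<pi> x * Kp m f x)) \<le> SS (\<lambda>x. w x * f x)"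
proof -
  have "ennreal \<theta> * (\<Sum>m. SS (\<lambda>x. \<pi> x * Kp m f x))
     = (SUP n. ennreal \<theta> * (\<Sum>m<n. SS (\<lambda>x. \<pi> x * Kp m f x)))"
    by (simp add: suminf_eq_SUP SUP_mult_left_ennreal)
  also have "\<dots> \<le> SS (\<lambda>x. w x * f x)"
  proof (rule SUP_least)
    fix n :: nat
    show "ennreal \<theta> * (\<Sum>m<n. SS (\<lambda>x. \<pi> x * Kp m f x)) \<le> SS (\<lambda>x. w x * f x)"
    proof (cases n)
      case 0 then show ?thesis by simp
    next
      case (Suc N)
      then have "{..<n} = {..N}" by auto
      then show ?thesis using Sub[where N=N and f=f] by simp
    qed
  qed
  finally show ?thesis .
qed


lemma wg: "w x * g x = \<pi> x * qe x"
  by (simp add: H4 mult.assoc[symmetric] H5)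

lemma part1: "ennreal \<theta> * (\<Sum>m. SS (\<lambda>x. \<pi> x * Kp m g x)) \<le> SS (\<lambda>x. \<pi> x * qe x)"
  using SubInf[of g] by (simp add: wg)

lemma R1: "ennreal \<theta> * (\<Sum>j\<le>N. Kp j d x) + Kp (Suc N) (\<lambda>_. 1) x \<le> 1"
proof (induction N arbitrary: x)
  case 0
  have "Kop (\<lambda>_. 1) x = g x" by (simp add: Kop_def H6)
  then show ?case by (simp add: Kp_Suc H3)
next
  case (Suc N)
  have "ennreal \<theta> * (\<Sum>j\<le>Suc N. Kp j d x) + Kp (Suc (Suc N)) (\<lambda>_. 1) x
     = ennreal \<theta> * d x + Kop (\<lambda>y. ennreal \<theta> * (\<Sum>j\<le>N. Kp j d y) + Kp (Suc N) (\<lambda>_. 1) y) x"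
    unfolding sum.atMost_Suc_shift Kop_add Kop_cmult Kop_sum
    by (simp add: Kp_Suc[of _ "\<lambda>_. 1"] Kp_Suc[of _ d] distrib_left add.assoc)
  also have "\<dots> \<le> ennreal \<theta> * d x + Kop (\<lambda>_. 1) x"
    by (intro add_left_mono Kop_mono Suc.IH)
  also have "\<dots> = 1" by (simp add: Kop_def H6 H3)
  finally show ?case .
qed

lemma R1inf: "ennreal \<theta> * (\<Sum>j. Kp j d x) \<le> 1"
proof -
  have "ennreal \<theta> * (\<Sum>j. Kp j d x) = (SUP n. ennreal \<theta> * (\<Sum>j<n. Kp j d x))"
    by (simp add: suminf_eq_SUP SUP_mult_left_ennreal)
  also have "\<dots> \<le> 1"
  proof (rule SUP_least)
    fix n :: nat
    show "ennreal \<theta> * (\<Sum>j<n. Kp j d x) \<le> 1"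
    proof (cases n)
      case 0 then show ?thesis by simp
    next
      case (Suc N)
      then have "{..<n} = {..N}" by auto
      then show ?thesis using R1[where N=N and x=x] by (metis add_increasing2 order_trans zero_le le_iff_add)
    qed
  qed
  finally show ?thesis .
qed


lemma ennreal_2ab: "2 * a * b \<le> a ^ 2 + (b::ennreal) ^ 2"
proof (cases "a = \<top> \<or> b = \<top>")
  case True then show ?thesis by (auto simp: power2_eq_square)
next
  case False
  then obtain x y where "a = ennreal x" "b = ennreal y" "0 \<le> x" "0 \<le> y"
    by (metis ennreal_cases)
  moreover have "2 * x * y \<le> x^2 + y^2" using sum_squares_bound by (smt (verit) power2_diff zero_le_power2)
  then have "ennreal (2 * x * y) \<le> ennreal (x^2 + y^2)" by (rule ennreal_leI)
  ultimately show ?thesis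
    by (simp add: ennreal_mult ennreal_power ennreal_plus[symmetric] del: ennreal_plus)
qed

definition "F' x = (\<Sum>j. Kp j g x)"

lemma part2_eq: "(\<Sum>n. of_nat n * SS (\<lambda>x. \<pi> x * Kp n g x)) = (\<Sum>m. SS (\<lambda>x. \<pi> x * Kp m (Kop F') x))"
proof -
  define a where "a n = SS (\<lambda>x. \<pi> x * Kp n g x)" for n
  have "of_nat n * a n = (\<Sum>m. if m < n then a n else 0)" for n
  proof -
    have "(\<Sum>m. if m < n then a n else 0) = (\<Sum>m<n. if m < n then a n else 0)"
      by (rule suminf_finite) auto
    then show ?thesis by simp
  qed
  then have "(\<Sum>n. of_nat n * a n) = (\<Sum>n. \<Sum>m. if m < n then a n else 0)" by simp
  also have "\<dots> = (\<Sum>m. \<Sum>n. if m < n then a n else 0)" by (rule suminf_swap_ennreal)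
  also have "\<dots> = (\<Sum>m. \<Sum>j. a (j + Suc m))"
  proof (rule suminf_cong)
    fix m
    have "(\<Sum>n. if m < n then a n else 0) = (\<Sum>j. (if m < j + Suc m then a (j + Suc m) else 0)) + (\<Sum>j<Suc m. if m < j then a j else 0)"
      by (rule suminf_offset) auto
    then show "(\<Sum>n. if m < n then a n else 0) = (\<Sum>j. a (j + Suc m))" by simp
  qed
  also have "\<dots> = (\<Sum>m. SS (\<lambda>x. \<pi> x * Kp m (Kop F') x))"
  proof (rule suminf_cong)
    fix m
    have "(\<Sum>j. a (j + Suc m)) = (\<Sum>j. SS (\<lambda>x. \<pi> x * Kp m (Kp (Suc j) g) x))"
      unfolding a_def by (simp add: Kp_add_n[symmetric] add.commute)
    also have "\<dots> = SS (\<lambda>x. \<Sum>j. \<pi> x * Kp m (Kp (Suc j) g) x)"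
      by (rule nn_integral_suminf[symmetric]) auto
    also have "\<dots> = SS (\<lambda>x. \<pi> x * Kp m (\<lambda>y. \<Sum>j. Kp (Suc j) g y) x)"
      by (simp add: Kp_suminf)
    also have "(\<lambda>y. \<Sum>j. Kp (Suc j) g y) = Kop F'"
      by (simp add: Kp_Suc Kop_suminf F'_def[abs_def] fun_eq_iff)
    finally show "(\<Sum>j. a (j + Suc m)) = SS (\<lambda>x. \<pi> x * Kp m (Kop F') x)" .
  qed
  finally show ?thesis unfolding a_def .
qed

lemma part2: "ennreal \<theta> * (\<Sum>n. of_nat n * SS (\<lambda>x. \<pi> x * Kp n g x)) \<le> SS (\<lambda>x. \<pi> x * qe x * F' x)"
  unfolding part2_eq using SubInf[of "Kop F'"] by (simp add: W)

lemma part3_pt: "2 * qe x * F' x \<le> qe x ^ 2 * (\<Sum>j. Kp j d x) + (\<Sum>j. Kp j (\<lambda>y. d y * qe y ^ 2) x)"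
proof -
  have "2 * qe x * F' x = (\<Sum>j. Kp j (\<lambda>y. 2 * qe x * qe y * d y) x)"
  proof -
    have e: "(\<lambda>y. 2 * qe x * qe y * d y) = (\<lambda>y. (2 * qe x) * g y)"
      by (simp add: H4 fun_eq_iff mult_ac)
    show ?thesis unfolding F'_def e Kp_cmult by simp
  qed
  also have "\<dots> \<le> (\<Sum>j. Kp j (\<lambda>y. qe x ^ 2 * d y + d y * qe y ^ 2) x)"
  proof (intro suminf_le Kp_mono)
    fix j y
    have "qe y * (qe x * 2) \<le> qe x ^ 2 + qe y ^ 2" using ennreal_2ab[of "qe x" "qe y"] by (simp add: mult_ac)
    then have "d y * (qe y * (qe x * 2)) \<le> d y * (qe x ^ 2 + qe y ^ 2)" by (rule mult_left_mono) auto
    then show "2 * qe x * qe y * d y \<le> qe x ^ 2 * d y + d y * qe y ^ 2" by (simp add: mult_ac distrib_left)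
  qed auto
  also have "\<dots> = (\<Sum>j. qe x ^ 2 * Kp j d x + Kp j (\<lambda>y. d y * qe y ^ 2) x)"
    by (simp add: Kp_add Kp_cmult)
  also have "\<dots> = qe x ^ 2 * (\<Sum>j. Kp j d x) + (\<Sum>j. Kp j (\<lambda>y. d y * qe y ^ 2) x)"
    by (simp add: suminf_add[symmetric])
  finally show ?thesis .
qed

lemma part3: "ennreal \<theta> * (2 * SS (\<lambda>x. \<pi> x * qe x * F' x)) \<le> 2 * SS (\<lambda>x. \<pi> x * qe x ^ 2)"
proof -
  have "ennreal \<theta> * (2 * SS (\<lambda>x. \<pi> x * qe x * F' x)) = SS (\<lambda>x. \<pi> x * (ennreal \<theta> * (2 * qe x * F' x)))"
    by (simp add: nn_integral_cmult[symmetric] mult.assoc mult.commute mult.left_commute)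
  also have "\<dots> \<le> SS (\<lambda>x. \<pi> x * qe x ^ 2 * (ennreal \<theta> * (\<Sum>j. Kp j d x)) + ennreal \<theta> * (\<pi> x * (\<Sum>j. Kp j (\<lambda>y. d y * qe y ^ 2) x)))"
    by (intro nn_integral_mono order_trans[OF mult_left_mono[OF mult_left_mono[OF part3_pt]]])
       (auto simp: distrib_left mult.assoc mult.commute mult.left_commute)
  also have "\<dots> = SS (\<lambda>x. \<pi> x * qe x ^ 2 * (ennreal \<theta> * (\<Sum>j. Kp j d x))) + ennreal \<theta> * (\<Sum>j. SS (\<lambda>x. \<pi> x * Kp j (\<lambda>y. d y * qe y ^ 2) x))"
    by (simp add: nn_integral_add nn_integral_cmult nn_integral_suminf[symmetric])
  also have "\<dots> \<le> SS (\<lambda>x. \<pi> x * qe x ^ 2) + SS (\<lambda>x. w x * (d x * qe x ^ 2))"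
    by (intro add_mono SubInf nn_integral_mono order_trans[OF mult_left_mono[OF R1inf]]) auto
  also have "\<dots> = 2 * SS (\<lambda>x. \<pi> x * qe x ^ 2)"
    by (simp add: mult.assoc[symmetric] H5 mult_2)
  finally show ?thesis .
qed

theorem kern_main:
  "ennreal \<theta> ^ 2 * (\<Sum>n. (2 * of_nat n + 1) * SS (\<lambda>x. \<pi> x * Kp n g x))
     \<le> ennreal \<theta> * SS (\<lambda>x. \<pi> x * qe x) + 2 * SS (\<lambda>x. \<pi> x * qe x ^ 2)"
proof -
  have "(\<Sum>n. (2 * of_nat n + 1) * SS (\<lambda>x. \<pi> x * Kp n g x))
      = 2 * (\<Sum>n. of_nat n * SS (\<lambda>x. \<pi> x * Kp n g x)) + (\<Sum>n. SS (\<lambda>x. \<pi> x * Kp n g x))"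
    by (simp add: distrib_right suminf_add[symmetric] mult.assoc)
  then have "ennreal \<theta> ^ 2 * (\<Sum>n. (2 * of_nat n + 1) * SS (\<lambda>x. \<pi> x * Kp n g x))
      = ennreal \<theta> * (2 * (ennreal \<theta> * (\<Sum>n. of_nat n * SS (\<lambda>x. \<pi> x * Kp n g x))))
        + ennreal \<theta> * (ennreal \<theta> * (\<Sum>n. SS (\<lambda>x. \<pi> x * Kp n g x)))"
    by (simp add: power2_eq_square distrib_left mult.assoc mult.left_commute)
  also have "\<dots> \<le> ennreal \<theta> * (2 * SS (\<lambda>x. \<pi> x * qe x * F' x)) + ennreal \<theta> * SS (\<lambda>x. \<pi> x * qe x)"
    by (intro add_mono mult_left_mono part2 part1) auto
  also have "\<dots> \<le> 2 * SS (\<lambda>x. \<pi> x * qe x ^ 2) + ennreal \<theta> * SS (\<lambda>x. \<pi> x * qe x)"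
    by (intro add_mono part3) auto
  finally show ?thesis by (simp add: add.commute)
qed

end

lemma ffall_nonneg: "0 \<le> ffall n k"
proof (cases "k \<le> n")
  case True
  then show ?thesis unfolding ffall_def by (intro prod_nonneg) auto
next
  case False
  then have "n \<in> {..<k}" by auto
  then show ?thesis unfolding ffall_def by (subst prod_zero) auto
qed

lemma ffall_nz: "ffall n k \<noteq> 0 \<Longrightarrow> k \<le> n"
proof (rule ccontr)
  assume "ffall n k \<noteq> 0" "\<not> k \<le> n"
  then have "n \<in> {..<k}" by auto
  then have "ffall n k = 0" unfolding ffall_def by (subst prod_zero) auto
  with \<open>ffall n k \<noteq> 0\<close> show False by simp
qed

locale crn =
  fixes U :: "'u set" and \<kappa> :: "'u \<Rightarrow> real" and y y' :: "'u \<Rightarrow> 'd::finite \<Rightarrow> nat"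
    and z0 :: "'d \<Rightarrow> nat" and \<pi> :: "('d \<Rightarrow> nat) \<Rightarrow> real"
  assumes finU: "finite U" and kpos: "\<forall>u\<in>U. 0 < \<kappa> u"
    and irred: "\<forall>x x'. (react_step U \<kappa> y y')\<^sup>*\<^sup>* z0 x \<and> (react_step U \<kappa> y y')\<^sup>*\<^sup>* z0 x'
               \<longrightarrow> (react_step U \<kappa> y y')\<^sup>*\<^sup>* x x'"
    and stat: "ctmc_stationary U \<kappa> y y' {x. (react_step U \<kappa> y y')\<^sup>*\<^sup>* z0 x} \<pi>"
    and summ: "(\<lambda>x. \<Sum>u\<in>U. (ma_rate \<kappa> y u x)\<^sup>2 * \<pi> x) summable_on UNIV"
begin

abbreviation "rate u x \<equiv> ma_rate \<kappa> y u x"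
abbreviation "q x \<equiv> total_rate U \<kappa> y y' x"
abbreviation "mv \<equiv> moving U y y'"
definition "tgt u x = (\<lambda>i. x i - y u i + y' u i)"
definition "src u x = (\<lambda>i. x i - y' u i + y u i)"
definition "Qr x x' = (\<Sum>u\<in>mv. if tgt u x = x' then rate u x else 0)"

lemma mv_sub: "mv \<subseteq> U" by (auto simp: moving_def)
lemma fin_mv: "finite mv" using finU mv_sub finite_subset by blast

lemma rate_nonneg: "u \<in> U \<Longrightarrow> 0 \<le> rate u x"
proof -
  assume "u \<in> U"
  then have "0 \<le> \<kappa> u" using kpos by (simp add: less_imp_le)
  moreover have "0 \<le> (\<Prod>i\<in>UNIV. ffall (x i) (y u i))" by (rule prod_nonneg) (simp add: ffall_nonneg)
  ultimately show ?thesis unfolding ma_rate_def by simp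
qed

lemma rate_nonneg_mv: "u \<in> mv \<Longrightarrow> 0 \<le> rate u x"
  using mv_sub rate_nonneg by blast

lemma rate_nz: "rate u x \<noteq> 0 \<Longrightarrow> y u i \<le> x i"
  unfolding ma_rate_def using ffall_nz by (metis UNIV_I mult_zero_right prod_zero_iff finite)

lemma q_nonneg: "0 \<le> q x"
  unfolding total_rate_def by (intro sum_nonneg rate_nonneg_mv)

lemma Qr_nonneg: "0 \<le> Qr x x'"
  unfolding Qr_def by (intro sum_nonneg) (auto intro: rate_nonneg_mv)

lemma pi_nonneg: "0 \<le> \<pi> x" using stat by (simp add: ctmc_stationary_def)

lemma ennreal_Qr: "ennreal (Qr x x') = (\<Sum>u\<in>mv. ennreal (rate u x) * indicator {tgt u x} x')"
proof -
  have "ennreal (Qr x x') = (\<Sum>u\<in>mv. ennreal (if tgt u x = x' then rate u x else 0))"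
    unfolding Qr_def by (rule sum_ennreal[symmetric]) (auto intro: rate_nonneg_mv)
  also have "\<dots> = (\<Sum>u\<in>mv. ennreal (rate u x) * indicator {tgt u x} x')"
    by (rule sum.cong) (auto split: split_indicator)
  finally show ?thesis .
qed

lemma SS_Qr: "SS (\<lambda>x'. ennreal (Qr x x')) = ennreal (q x)"
proof -
  have "SS (\<lambda>x'. ennreal (Qr x x')) = (\<Sum>u\<in>mv. SS (\<lambda>x'. ennreal (rate u x) * indicator {tgt u x} x'))"
    unfolding ennreal_Qr by (rule nn_integral_sum) auto
  also have "\<dots> = (\<Sum>u\<in>mv. ennreal (rate u x))"
    by (simp add: nn_integral_cmult)
  also have "\<dots> = ennreal (q x)"
    unfolding total_rate_def by (rule sum_ennreal) (rule rate_nonneg_mv)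
  finally show ?thesis .
qed

lemma balance: "\<pi> x * q x = (\<Sum>u\<in>mv. if (\<forall>i. y' u i \<le> x i) then \<pi> (src u x) * rate u (src u x) else 0)"
  using stat unfolding ctmc_stationary_def src_def by blast

lemma tgt_src_iff:
  assumes "rate u x \<noteq> 0"
  shows "tgt u x = x' \<longleftrightarrow> (\<forall>i. y' u i \<le> x' i) \<and> x = src u x'"
proof -
  have le: "\<And>i. y u i \<le> x i" using rate_nz[OF assms] .
  show ?thesis
  proof
    assume a: "tgt u x = x'"
    have "y' u i \<le> x' i \<and> x i = x' i - y' u i + y u i" for i
    proof -
      have "x' i = x i - y u i + y' u i" using a by (auto simp: tgt_def)
      then show ?thesis using le[of i] by simp
    qed
    then show "(\<forall>i. y' u i \<le> x' i) \<and> x = src u x'" by (auto simp: src_def fun_eq_iff)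
  next
    assume "(\<forall>i. y' u i \<le> x' i) \<and> x = src u x'"
    then show "tgt u x = x'" using le by (auto simp: src_def tgt_def fun_eq_iff)
  qed
qed

lemma SS_stat: "SS (\<lambda>x. ennreal (\<pi> x * Qr x x')) = ennreal (\<pi> x' * q x')"
proof -
  have "ennreal (\<pi> x * Qr x x') = (\<Sum>u\<in>mv. ennreal (if (\<forall>i. y' u i \<le> x' i) then \<pi> (src u x') * rate u (src u x') else 0) * indicator {src u x'} x)" for x
  proof -
    have "ennreal (\<pi> x * Qr x x') = (\<Sum>u\<in>mv. ennreal (\<pi> x * (if tgt u x = x' then rate u x else 0)))"
      unfolding Qr_def sum_distrib_left
      by (subst sum_ennreal) (auto intro!: mult_nonneg_nonneg pi_nonneg rate_nonneg_mv)
    also have "\<dots> = (\<Sum>u\<in>mv. ennreal (if (\<forall>i. y' u i \<le> x' i) then \<pi> (src u x') * rate u (src u x') else 0) * indicator {src u x'} x)"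
    proof (rule sum.cong)
      fix u assume "u \<in> mv"
      show "ennreal (\<pi> x * (if tgt u x = x' then rate u x else 0)) = ennreal (if (\<forall>i. y' u i \<le> x' i) then \<pi> (src u x') * rate u (src u x') else 0) * indicator {src u x'} x"
      proof (cases "rate u x = 0")
        case True
        then show ?thesis by (auto split: split_indicator)
      next
        case False
        then show ?thesis using tgt_src_iff[OF False, of x'] by (auto split: split_indicator)
      qed
    qed simp
    finally show ?thesis .
  qed
  then have "SS (\<lambda>x. ennreal (\<pi> x * Qr x x')) = SS (\<lambda>x. \<Sum>u\<in>mv. ennreal (if (\<forall>i. y' u i \<le> x' i) then \<pi> (src u x') * rate u (src u x') else 0) * indicator {src u x'} x)"
    by simp
  also have "\<dots> = (\<Sum>u\<in>mv. ennreal (if (\<forall>i. y' u i \<le> x' i) then \<pi> (src u x') * rate u (src u x') else 0))"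
    by (subst nn_integral_sum) (auto simp: nn_integral_cmult)
  also have "\<dots> = ennreal (\<pi> x' * q x')"
    unfolding balance by (rule sum_ennreal) (auto intro!: mult_nonneg_nonneg pi_nonneg rate_nonneg_mv)
  finally show ?thesis .
qed

lemma step_pos:
  assumes "react_step U \<kappa> y y' a b" "\<pi> a > 0"
  shows "\<pi> b > 0"
proof -
  obtain u where u: "u \<in> mv" "rate u a > 0" "b = tgt u a"
    using assms(1) unfolding react_step_def tgt_def by blast
  then have r: "rate u a \<noteq> 0" by simp
  have c: "(\<forall>i. y' u i \<le> b i) \<and> a = src u b" using tgt_src_iff[OF r, of b] u by simp
  have "0 < \<pi> a * rate u a" using u assms by simp
  also have "\<dots> = (if (\<forall>i. y' u i \<le> b i) then \<pi> (src u b) * rate u (src u b) else 0)" using c by simp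
  also have "\<dots> \<le> (\<Sum>u\<in>mv. if (\<forall>i. y' u i \<le> b i) then \<pi> (src u b) * rate u (src u b) else 0)"
    by (rule member_le_sum) (auto intro!: mult_nonneg_nonneg pi_nonneg rate_nonneg_mv u fin_mv)
  also have "\<dots> = \<pi> b * q b" by (simp add: balance)
  finally have "0 < \<pi> b * q b" .
  then show ?thesis using pi_nonneg[of b] q_nonneg[of b] by (metis less_eq_real_def mult_eq_0_iff)
qed

lemma reach_pos:
  assumes "(react_step U \<kappa> y y')\<^sup>*\<^sup>* a b" "\<pi> a > 0"
  shows "\<pi> b > 0"
  using assms by (induction rule: rtranclp_induct) (auto intro: step_pos)

lemma pi_z0_pos: "\<pi> z0 > 0"
proof -
  have hs: "(\<pi> has_sum 1) UNIV" using stat by (simp add: ctmc_stationary_def)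
  have "\<exists>x. \<pi> x \<noteq> 0"
  proof (rule ccontr)
    assume "\<not> ?thesis"
    then have "(\<pi> has_sum 0) UNIV" by (simp add: has_sum_0)
    with hs show False using has_sum_unique by fastforce
  qed
  then obtain x where x: "\<pi> x \<noteq> 0" by blast
  then have px: "\<pi> x > 0" using pi_nonneg[of x] by simp
  have "(react_step U \<kappa> y y')\<^sup>*\<^sup>* z0 x"
    using stat x unfolding ctmc_stationary_def by blast
  then have "(react_step U \<kappa> y y')\<^sup>*\<^sup>* x z0" using irred by blast
  then show ?thesis using reach_pos px by blast
qed


definition "Kt \<theta> x x' = ennreal (Qr x x' / (q x + \<theta>))"
definition "gt \<theta> x = ennreal (q x / (q x + \<theta>))"
definition "dt \<theta> x = ennreal (1 / (q x + \<theta>))"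
definition "wt \<theta> x = ennreal (\<pi> x * (q x + \<theta>))"
definition "pe x = ennreal (\<pi> x)"
definition "qe x = ennreal (q x)"

lemma kern_inst:
  assumes th: "\<theta> > 0"
  shows "kern (Kt \<theta>) pe (wt \<theta>) qe (dt \<theta>) (gt \<theta>) \<theta>"
proof
  have qp: "q x + \<theta> > 0" for x using q_nonneg[of x] th by linarith
  show "0 < \<theta>" by fact
  show "SS (\<lambda>x. wt \<theta> x * Kt \<theta> x x') = pe x' * qe x'" for x'
  proof -
    have "wt \<theta> x * Kt \<theta> x x' = ennreal (\<pi> x * Qr x x')" for x
      unfolding wt_def Kt_def using qp[of x] pi_nonneg[of x] Qr_nonneg[of x x']
      by (simp add: ennreal_mult[symmetric])
    then show ?thesis using SS_stat[of x'] by (simp add: pe_def qe_def ennreal_mult pi_nonneg q_nonneg)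
  qed
  show "wt \<theta> x = pe x * qe x + ennreal \<theta> * pe x" for x
  proof -
    have "wt \<theta> x = ennreal (\<pi> x * q x + \<theta> * \<pi> x)" unfolding wt_def by (simp add: algebra_simps)
    also have "\<dots> = ennreal (\<pi> x * q x) + ennreal (\<theta> * \<pi> x)"
      using pi_nonneg[of x] q_nonneg[of x] th by (intro ennreal_plus) auto
    also have "\<dots> = pe x * qe x + ennreal \<theta> * pe x"
      unfolding pe_def qe_def using pi_nonneg[of x] q_nonneg[of x] th by (simp add: ennreal_mult)
    finally show ?thesis .
  qed
  show "ennreal \<theta> * dt \<theta> x + gt \<theta> x = 1" for x
  proof -
    have "\<theta> * (1 / (q x + \<theta>)) + q x / (q x + \<theta>) = (\<theta> + q x) / (q x + \<theta>)"
      by (simp add: add_divide_distrib)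
    also have "\<dots> = 1" using qp[of x] by simp
    finally have "\<theta> * (1 / (q x + \<theta>)) + q x / (q x + \<theta>) = 1" .
    then have "ennreal (\<theta> * (1 / (q x + \<theta>))) + ennreal (q x / (q x + \<theta>)) = 1"
      using qp[of x] q_nonneg[of x] th by (subst ennreal_plus[symmetric]) auto
    moreover have "ennreal \<theta> * ennreal (1 / (q x + \<theta>)) = ennreal (\<theta> * (1 / (q x + \<theta>)))"
      using th by (subst ennreal_mult'[symmetric]) auto
    ultimately show ?thesis unfolding dt_def gt_def by simp
  qed
  show "gt \<theta> x = dt \<theta> x * qe x" for x
    unfolding dt_def gt_def qe_def using qp[of x] q_nonneg[of x]
    by (simp add: ennreal_mult[symmetric])
  show "wt \<theta> x * dt \<theta> x = pe x" for x
    unfolding dt_def wt_def pe_def using qp[of x] pi_nonneg[of x]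
    by (simp add: ennreal_mult[symmetric])
  show "SS (Kt \<theta> x) = gt \<theta> x" for x
  proof -
    have "SS (Kt \<theta> x) = SS (\<lambda>x'. ennreal (Qr x x') * ennreal (1 / (q x + \<theta>)))"
      unfolding Kt_def using qp[of x] Qr_nonneg[of x] by (simp add: ennreal_mult[symmetric])
    also have "\<dots> = ennreal (q x) * ennreal (1 / (q x + \<theta>))"
      by (simp add: nn_integral_multc SS_Qr)
    finally show ?thesis unfolding gt_def using qp[of x] q_nonneg[of x] by (simp add: ennreal_mult[symmetric])
  qed
qed

lemma summable_SS:
  assumes "f summable_on UNIV" "\<And>x. 0 \<le> f x"
  shows "SS (\<lambda>x. ennreal (f x)) < \<top>"
proof -
  have "Infinite_Sum.abs_summable_on f UNIV" using assms summable_on_iff_abs_summable_on_real by blast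
  then have "Infinite_Set_Sum.abs_summable_on f UNIV" using abs_summable_equivalent by blast
  then show ?thesis using assms(2) by (simp add: nn_integral_conv_infsetsum)
qed

lemma q_sq_bound: "(q x)\<^sup>2 \<le> (real (card U))\<^sup>2 * (\<Sum>u\<in>U. (rate u x)\<^sup>2)"
proof -
  define s where "s = sqrt (\<Sum>u\<in>U. (rate u x)\<^sup>2)"
  have s0: "0 \<le> s" unfolding s_def by (simp add: sum_nonneg)
  have "rate u x \<le> s" if "u \<in> U" for u
  proof -
    have "(rate u x)\<^sup>2 \<le> (\<Sum>u\<in>U. (rate u x)\<^sup>2)"
      using that finU by (intro member_le_sum) auto
    then show ?thesis unfolding s_def by (metis real_le_rsqrt)
  qed
  then have "q x \<le> (\<Sum>u\<in>mv. s)"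
    unfolding total_rate_def using mv_sub by (intro sum_mono) auto
  also have "\<dots> = real (card mv) * s" by simp
  also have "\<dots> \<le> real (card U) * s"
    using card_mono[OF finU mv_sub] s0 by (intro mult_right_mono) auto
  finally have "q x \<le> real (card U) * s" .
  then have "(q x)\<^sup>2 \<le> (real (card U) * s)\<^sup>2" using q_nonneg[of x] by (intro power_mono) auto
  also have "\<dots> = (real (card U))\<^sup>2 * (\<Sum>u\<in>U. (rate u x)\<^sup>2)"
    unfolding s_def power_mult_distrib by (simp add: sum_nonneg)
  finally show ?thesis .
qed

lemma A2_fin: "SS (\<lambda>x. pe x * qe x ^ 2) < \<top>"
proof -
  have "SS (\<lambda>x. pe x * qe x ^ 2) \<le> SS (\<lambda>x. ennreal ((real (card U))\<^sup>2 * ((\<Sum>u\<in>U. (rate u x)\<^sup>2) * \<pi> x)))"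
  proof (rule nn_integral_mono)
    fix x
    have "\<pi> x * (q x)\<^sup>2 \<le> \<pi> x * ((real (card U))\<^sup>2 * (\<Sum>u\<in>U. (rate u x)\<^sup>2))"
      using q_sq_bound pi_nonneg by (intro mult_left_mono) auto
    then show "pe x * qe x ^ 2 \<le> ennreal ((real (card U))\<^sup>2 * ((\<Sum>u\<in>U. (rate u x)\<^sup>2) * \<pi> x))"
    proof -
      have "pe x * qe x ^ 2 = ennreal (\<pi> x * (q x)\<^sup>2)"
        unfolding pe_def qe_def using pi_nonneg[of x] q_nonneg[of x] by (simp add: ennreal_mult ennreal_power)
      also have "\<dots> \<le> ennreal ((real (card U))\<^sup>2 * ((\<Sum>u\<in>U. (rate u x)\<^sup>2) * \<pi> x))"
        using \<open>\<pi> x * (q x)\<^sup>2 \<le> _\<close> by (intro ennreal_leI) (simp add: mult_ac)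
      finally show ?thesis .
    qed
  qed
  also have "\<dots> = ennreal ((real (card U))\<^sup>2) * SS (\<lambda>x. ennreal ((\<Sum>u\<in>U. (rate u x)\<^sup>2) * \<pi> x))"
    by (simp add: ennreal_mult nn_integral_cmult pi_nonneg sum_nonneg)
  also have "\<dots> < \<top>"
  proof -
    have "SS (\<lambda>x. ennreal ((\<Sum>u\<in>U. (rate u x)\<^sup>2) * \<pi> x)) < \<top>"
      using summ by (intro summable_SS) (auto simp: sum_distrib_right pi_nonneg intro!: sum_nonneg mult_nonneg_nonneg)
    then show ?thesis by (simp add: ennreal_mult_less_top)
  qed
  finally show ?thesis .
qed

lemma A0_fin: "SS pe < \<top>"
proof -
  have "\<pi> summable_on UNIV" using stat by (auto simp: ctmc_stationary_def summable_on_def)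
  then show ?thesis unfolding pe_def using summable_SS pi_nonneg by blast
qed

lemma A1_fin: "SS (\<lambda>x. pe x * qe x) < \<top>"
proof -
  have "SS (\<lambda>x. pe x * qe x) \<le> SS (\<lambda>x. pe x + pe x * qe x ^ 2)"
  proof (rule nn_integral_mono)
    fix x
    have "q x \<le> 1 + (q x)\<^sup>2"
    proof (cases "q x \<le> 1")
      case True then show ?thesis by (smt (verit) zero_le_power2)
    next
      case False then have "q x * 1 \<le> q x * q x" by (intro mult_left_mono) auto
      then show ?thesis by (simp add: power2_eq_square)
    qed
    then have "\<pi> x * q x \<le> \<pi> x * (1 + (q x)\<^sup>2)" using pi_nonneg by (intro mult_left_mono) auto
    then show "pe x * qe x \<le> pe x + pe x * qe x ^ 2"
    proof -
      have "ennreal (\<pi> x * q x) \<le> ennreal (\<pi> x + \<pi> x * (q x)\<^sup>2)"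
        using \<open>\<pi> x * q x \<le> \<pi> x * (1 + (q x)\<^sup>2)\<close> by (intro ennreal_leI) (simp add: distrib_left)
      also have "\<dots> = ennreal (\<pi> x) + ennreal (\<pi> x * (q x)\<^sup>2)"
        using pi_nonneg[of x] q_nonneg[of x] by (intro ennreal_plus) auto
      finally show ?thesis unfolding pe_def qe_def using pi_nonneg[of x] q_nonneg[of x]
        by (simp add: ennreal_mult ennreal_power)
    qed
  qed
  also have "\<dots> = SS pe + SS (\<lambda>x. pe x * qe x ^ 2)" by (simp add: nn_integral_add)
  also have "\<dots> < \<top>" using A0_fin A2_fin by simp
  finally show ?thesis .
qed

end

lemma prod_neg: "(\<Prod>i\<in>S. - f i) = (- 1) ^ card S * (\<Prod>i\<in>S. f i :: real)"
  by (induction S rule: infinite_finite_induct) auto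

definition Phr :: "real \<Rightarrow> ennreal \<Rightarrow> real" where
  "Phr \<theta> h = (if h = \<top> then 1 else 1 - exp (- \<theta> * enn2real h))"
definition Psr :: "real \<Rightarrow> ennreal \<Rightarrow> real" where
  "Psr \<theta> h = (if h = \<top> then 0 else exp (- \<theta> * enn2real h))"

lemma Phr_Psr: "Psr \<theta> h = 1 - Phr \<theta> h" by (simp add: Phr_def Psr_def)

lemma Phr_meas[measurable]: "Phr \<theta> \<in> borel_measurable borel"
  unfolding Phr_def by measurable

lemma Psr_meas[measurable]: "Psr \<theta> \<in> borel_measurable borel"
  unfolding Psr_def by measurable

lemma Phr_range: "\<theta> > 0 \<Longrightarrow> 0 \<le> Phr \<theta> h \<and> Phr \<theta> h \<le> 1"
  by (auto simp: Phr_def enn2real_nonneg)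

lemma Psr_range: "\<theta> > 0 \<Longrightarrow> 0 \<le> Psr \<theta> h \<and> Psr \<theta> h \<le> 1"
  by (auto simp: Psr_def enn2real_nonneg)

lemma Phr_0: "Phr \<theta> 0 = 0" by (simp add: Phr_def)

lemma exp_tail:
  assumes c: "c > 0"
  shows "(\<integral>\<^sup>+\<sigma>. ennreal (c * exp (- c * \<sigma>)) * indicator {a..} \<sigma> \<partial>lborel) = ennreal (exp (- c * a))"
proof -
  have "(\<integral>\<^sup>+\<sigma>. ennreal (c * exp (- c * \<sigma>)) * indicator {a..} \<sigma> \<partial>lborel) = 0 - (- exp (- c * a))"
  proof (rule nn_integral_FTC_atLeast)
    show "(\<lambda>\<sigma>. c * exp (- c * \<sigma>)) \<in> borel_measurable borel" by measurable
    show "DERIV (\<lambda>\<sigma>. - exp (- c * \<sigma>)) x :> c * exp (- c * x)" for x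
      by (auto intro!: derivative_eq_intros)
    show "0 \<le> c * exp (- c * x)" for x using c by simp
    show "((\<lambda>\<sigma>. - exp (- c * \<sigma>)) \<longlongrightarrow> 0) at_top"
      using c by real_asymp
  qed
  then show ?thesis by simp
qed


lemma exp_total: "c > 0 \<Longrightarrow> (\<integral>\<^sup>+\<sigma>. ennreal (c * exp (- c * \<sigma>)) * indicator {0..} \<sigma> \<partial>lborel) = 1"
  using exp_tail[of c 0] by simp

lemma Phr_rep:
  assumes th: "\<theta> > 0"
  shows "ennreal (Phr \<theta> h) = (\<integral>\<^sup>+\<sigma>. ennreal (\<theta> * exp (- \<theta> * \<sigma>)) * indicator {0..} \<sigma> * indicator {\<sigma>. ennreal \<sigma> < h} \<sigma> \<partial>lborel)"
proof (cases "h = \<top>")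
  case True
  then show ?thesis using exp_total[OF th] by (simp add: Phr_def)
next
  case False
  then obtain a where a: "h = ennreal a" "0 \<le> a" by (cases h) auto
  have "1 = (\<integral>\<^sup>+\<sigma>. ennreal (\<theta> * exp (- \<theta> * \<sigma>)) * indicator {0..} \<sigma> \<partial>lborel)"
    using exp_total[OF th] by simp
  also have "\<dots> = (\<integral>\<^sup>+\<sigma>. ennreal (\<theta> * exp (- \<theta> * \<sigma>)) * indicator {0..} \<sigma> * indicator {\<sigma>. ennreal \<sigma> < h} \<sigma>
      + ennreal (\<theta> * exp (- \<theta> * \<sigma>)) * indicator {a..} \<sigma> \<partial>lborel)"
    using a by (intro nn_integral_cong) (auto split: split_indicator simp: ennreal_less_iff)
  also have "\<dots> = (\<integral>\<^sup>+\<sigma>. ennreal (\<theta> * exp (- \<theta> * \<sigma>)) * indicator {0..} \<sigma> * indicator {\<sigma>. ennreal \<sigma> < h} \<sigma> \<partial>lborel)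
      + ennreal (exp (- \<theta> * a))"
    using exp_tail[OF th, of a] by (subst nn_integral_add) (auto simp: a)
  finally have e: "1 = (\<integral>\<^sup>+\<sigma>. ennreal (\<theta> * exp (- \<theta> * \<sigma>)) * indicator {0..} \<sigma> * indicator {\<sigma>. ennreal \<sigma> < h} \<sigma> \<partial>lborel)
      + ennreal (exp (- \<theta> * a))" .
  have "ennreal (Phr \<theta> h) = ennreal (1 - exp (- \<theta> * a))"
    using a th by (simp add: Phr_def)
  also have "\<dots> = ennreal 1 - ennreal (exp (- \<theta> * a))"
    by (rule ennreal_minus[symmetric]) simp
  also have "\<dots> = ((\<integral>\<^sup>+\<sigma>. ennreal (\<theta> * exp (- \<theta> * \<sigma>)) * indicator {0..} \<sigma> * indicator {\<sigma>. ennreal \<sigma> < h} \<sigma> \<partial>lborel)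
      + ennreal (exp (- \<theta> * a))) - ennreal (exp (- \<theta> * a))"
    using e by (metis ennreal_1)
  also have "\<dots> = (\<integral>\<^sup>+\<sigma>. ennreal (\<theta> * exp (- \<theta> * \<sigma>)) * indicator {0..} \<sigma> * indicator {\<sigma>. ennreal \<sigma> < h} \<sigma> \<partial>lborel)"
    by (rule ennreal_add_diff_cancel_right) simp
  finally show ?thesis .
qed

lemma exp_int:
  assumes th: "\<theta> > 0" and c: "c \<ge> 0"
  shows "(\<integral>\<^sup>+\<sigma>. ennreal (\<theta> * exp (- \<theta> * \<sigma>)) * indicator {0..} \<sigma> * ennreal (exp (- c * \<sigma>)) \<partial>lborel) = ennreal (\<theta> / (\<theta> + c))"
proof -
  have "(\<integral>\<^sup>+\<sigma>. ennreal (\<theta> * exp (- \<theta> * \<sigma>)) * indicator {0..} \<sigma> * ennreal (exp (- c * \<sigma>)) \<partial>lborel)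
     = (\<integral>\<^sup>+\<sigma>. ennreal (\<theta> / (\<theta> + c)) * (ennreal ((\<theta> + c) * exp (- (\<theta> + c) * \<sigma>)) * indicator {0..} \<sigma>) \<partial>lborel)"
  proof (intro nn_integral_cong)
    fix \<sigma> :: real
    have "\<theta> * exp (- \<theta> * \<sigma>) * exp (- c * \<sigma>) = \<theta> / (\<theta> + c) * ((\<theta> + c) * exp (- (\<theta> + c) * \<sigma>))"
    proof -
      have "exp (- \<theta> * \<sigma>) * exp (- c * \<sigma>) = exp (- (\<theta> + c) * \<sigma>)"
        by (simp add: exp_add[symmetric] algebra_simps)
      moreover have "\<theta> / (\<theta> + c) * (\<theta> + c) = \<theta>" using th c by simp
      ultimately show ?thesis by (metis mult.assoc)
    qed
    then show "ennreal (\<theta> * exp (- \<theta> * \<sigma>)) * indicator {0..} \<sigma> * ennreal (exp (- c * \<sigma>))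
      = ennreal (\<theta> / (\<theta> + c)) * (ennreal ((\<theta> + c) * exp (- (\<theta> + c) * \<sigma>)) * indicator {0..} \<sigma>)"
      using th c by (auto split: split_indicator simp: ennreal_mult'[symmetric] mult_ac)
  qed
  also have "\<dots> = ennreal (\<theta> / (\<theta> + c))"
    using exp_total[of "\<theta> + c"] th c by (simp add: nn_integral_cmult)
  finally show ?thesis .
qed


fun Wl :: "('a \<Rightarrow> 'a \<Rightarrow> ennreal) \<Rightarrow> ('a \<Rightarrow> ennreal) \<Rightarrow> 'a \<Rightarrow> 'a list \<Rightarrow> ennreal" where
  "Wl P h z [] = h z"
| "Wl P h z (x # xs) = P z x * Wl P h x xs"

fun Iter :: "('a::countable \<Rightarrow> 'a \<Rightarrow> ennreal) \<Rightarrow> ('a \<Rightarrow> ennreal) \<Rightarrow> nat \<Rightarrow> 'a \<Rightarrow> ennreal" where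
  "Iter P h 0 z = h z"
| "Iter P h (Suc n) z = SS (\<lambda>x. P z x * Iter P h n x)"

lemma SS_single: "SS (\<lambda>x. c * indicator {a} x) = (c::ennreal)"
  by (simp add: nn_integral_cmult)

lemma list_split:
  fixes F :: "'a::countable list \<Rightarrow> ennreal"
  shows "SS F = F [] + SS (\<lambda>x. SS (\<lambda>xs. F (x # xs)))"
proof -
  have "SS (\<lambda>x. SS (\<lambda>xs. F (x # xs))) = SS (\<lambda>x. SS (\<lambda>xs. SS (\<lambda>ys. F ys * indicator {x # xs} ys)))"
    by (simp add: nn_integral_indicator_singleton)
  also have "\<dots> = SS (\<lambda>x. SS (\<lambda>ys. SS (\<lambda>xs. F ys * indicator {x # xs} ys)))"
    by (subst SS_swap) simp
  also have "\<dots> = SS (\<lambda>ys. SS (\<lambda>x. SS (\<lambda>xs. F ys * indicator {x # xs} ys)))"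
    by (rule SS_swap)
  also have "\<dots> = SS (\<lambda>ys. F ys * (if ys = [] then 0 else 1))"
  proof (rule nn_integral_cong)
    fix ys :: "'a list"
    show "SS (\<lambda>x. SS (\<lambda>xs. F ys * indicator {x # xs} ys)) = F ys * (if ys = [] then 0 else 1)"
    proof (cases ys)
      case Nil then show ?thesis by simp
    next
      case (Cons a as)
      have "SS (\<lambda>xs. F ys * indicator {x # xs} ys) = F ys * indicator {a} x" for x
      proof (cases "x = a")
        case True
        have "(\<lambda>xs. F ys * indicator {x # xs} ys) = (\<lambda>xs. F ys * indicator {as} xs)"
          using True Cons by (auto simp: fun_eq_iff split: split_indicator)
        then show ?thesis using True by (simp add: SS_single)
      next
        case False
        then show ?thesis using Cons by (simp add: indicator_def)
      qed
      then show ?thesis using Cons by (simp add: SS_single)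
    qed
  qed
  finally have e: "SS (\<lambda>x. SS (\<lambda>xs. F (x # xs))) = SS (\<lambda>ys. F ys * (if ys = [] then 0 else 1))" .
  have "SS F = SS (\<lambda>ys. F ys * indicator {[]} ys + F ys * (if ys = [] then 0 else 1))"
    by (intro nn_integral_cong) (auto split: split_indicator)
  also have "\<dots> = F [] + SS (\<lambda>ys. F ys * (if ys = [] then 0 else 1))"
    by (subst nn_integral_add) auto
  finally show ?thesis unfolding e .
qed

lemma path_sum: "SS (\<lambda>xs. if length xs = n then Wl P h z xs else 0) = Iter P h n z"
proof (induction n arbitrary: z)
  case 0
  have "(\<lambda>xs. if length xs = 0 then Wl P h z xs else 0) = (\<lambda>xs. h z * indicator {[]} xs)"
    by (auto simp: fun_eq_iff split: split_indicator)
  then show ?case by (simp add: SS_single)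
next
  case (Suc n)
  have "SS (\<lambda>xs. if length xs = Suc n then Wl P h z xs else 0)
      = SS (\<lambda>x. SS (\<lambda>xs. P z x * (if length xs = n then Wl P h x xs else 0)))"
    by (subst list_split) (simp add: if_distrib cong: if_cong)
  also have "\<dots> = SS (\<lambda>x. P z x * Iter P h n x)"
    by (simp add: nn_integral_cmult Suc)
  finally show ?case by simp
qed

lemma suminf_one_top: "(\<Sum>n::nat. (1::ennreal)) = \<top>"
proof -
  have "of_nat N \<le> (\<Sum>n::nat. (1::ennreal))" for N
  proof -
    have "(\<Sum>n<N. (1::ennreal)) \<le> (\<Sum>n::nat. (1::ennreal))" by (rule sum_le_suminf) auto
    then show ?thesis by simp
  qed
  then have "(SUP N. of_nat N :: ennreal) \<le> (\<Sum>n::nat. (1::ennreal))" by (rule SUP_least)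
  then show ?thesis by (simp add: ennreal_SUP_of_nat_eq_top top_unique)
qed

lemma sum_odd_sq: "(\<Sum>n<k. 2 * of_nat n + (1::ennreal)) = of_nat k ^ 2"
proof (induction k)
  case (Suc k)
  have "(of_nat k :: ennreal) ^ 2 + (2 * of_nat k + 1) = of_nat (k^2 + 2 * k + 1)"
    by (simp add: of_nat_add of_nat_mult power2_eq_square)
  also have "k^2 + 2 * k + 1 = (Suc k)^2" by (simp add: power2_eq_square)
  finally show ?case using Suc by (simp add: of_nat_power)
qed simp

lemma sq_count:
  assumes anti: "\<And>n. P (Suc n) \<Longrightarrow> P n"
  shows "(\<Sum>n. if P n then 1 else 0 :: ennreal) ^ 2 = (\<Sum>n. (2 * of_nat n + 1) * (if P n then 1 else 0))"
proof (cases "\<forall>n. P n")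
  case True
  have "(\<Sum>n. (1::ennreal)) \<le> (\<Sum>n. (2 * of_nat n + 1) * (if P n then 1 else 0 :: ennreal))"
    using True by (intro suminf_le) auto
  then show ?thesis using True by (simp add: suminf_one_top top_unique power2_eq_square)
next
  case False
  define k where "k = (LEAST n. \<not> P n)"
  have nk: "\<not> P k" unfolding k_def using False by (metis LeastI)
  have Pk: "P n \<longleftrightarrow> n < k" for n
  proof
    assume "P n"
    show "n < k"
    proof (rule ccontr)
      assume "\<not> n < k"
      then have "k \<le> n" by simp
      then have "\<not> P n"
      proof (induction n rule: dec_induct)
        case base then show ?case by (rule nk)
      next
        case (step m) then show ?case using anti by blast
      qed
      with \<open>P n\<close> show False by simp
    qed
  next
    assume "n < k"
    then show "P n" unfolding k_def using not_less_Least by blast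
  qed
  have "(\<Sum>n. if P n then 1 else 0 :: ennreal) = (\<Sum>n<k. if P n then 1 else 0)"
    by (rule suminf_finite) (auto simp: Pk)
  also have "\<dots> = of_nat k" by (simp add: Pk)
  finally have a: "(\<Sum>n. if P n then 1 else 0 :: ennreal) = of_nat k" .
  have "(\<Sum>n. (2 * of_nat n + 1) * (if P n then 1 else 0 :: ennreal)) = (\<Sum>n<k. (2 * of_nat n + 1) * (if P n then 1 else 0))"
    by (rule suminf_finite) (auto simp: Pk)
  also have "\<dots> = (\<Sum>n<k. 2 * of_nat n + 1)" by (simp add: Pk)
  also have "\<dots> = of_nat k ^ 2" by (rule sum_odd_sq)
  finally show ?thesis using a by simp
qed

lemma exp_S:
  assumes th: "\<theta> > 0"
  shows "(\<integral>\<^sup>+\<sigma>. ennreal (\<theta> * exp (- \<theta> * \<sigma>)) * indicator {0..} \<sigma> * (if S \<le> ennreal \<sigma> then 1 else 0) \<partial>lborel)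
     = ennreal (if S = \<top> then 0 else exp (- \<theta> * enn2real S))"
proof (cases "S = \<top>")
  case True then show ?thesis by (simp add: top_unique)
next
  case False
  then obtain a where a: "S = ennreal a" "0 \<le> a" by (cases S) auto
  have "(\<integral>\<^sup>+\<sigma>. ennreal (\<theta> * exp (- \<theta> * \<sigma>)) * indicator {0..} \<sigma> * (if S \<le> ennreal \<sigma> then 1 else 0) \<partial>lborel)
     = (\<integral>\<^sup>+\<sigma>. ennreal (\<theta> * exp (- \<theta> * \<sigma>)) * indicator {a..} \<sigma> \<partial>lborel)"
    using a by (intro nn_integral_cong) (auto split: split_indicator simp: ennreal_le_iff2)
  also have "\<dots> = ennreal (exp (- \<theta> * a))" by (rule exp_tail[OF th])
  finally show ?thesis using a by simp
qed

lemma Psr_prod_sum: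
  fixes h :: "nat \<Rightarrow> ennreal"
  shows "(if (\<Sum>i\<le>n. h i) = \<top> then 0 else exp (- \<theta> * enn2real (\<Sum>i\<le>n. h i))) = (\<Prod>i\<le>n. Psr \<theta> (h i))"
proof (cases "\<exists>i\<le>n. h i = \<top>")
  case True
  then obtain i where i: "i \<le> n" "h i = \<top>" by blast
  then have "h i \<le> (\<Sum>i\<le>n. h i)" by (intro member_le_sum) auto
  then have "(\<Sum>i\<le>n. h i) = \<top>" using i by (simp add: top_unique)
  moreover have "(\<Prod>i\<le>n. Psr \<theta> (h i)) = 0" using i by (intro prod_zero) (auto simp: Psr_def)
  ultimately show ?thesis by simp
next
  case False
  then have fin: "\<And>i. i \<in> {..n} \<Longrightarrow> h i < \<top>" by (auto simp: top.not_eq_extremum)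
  then have "(\<Sum>i\<le>n. h i) \<noteq> \<top>" by (simp add: less_top[symmetric])
  moreover have "enn2real (\<Sum>i\<le>n. h i) = (\<Sum>i\<le>n. enn2real (h i))"
  proof -
    have "enn2real (sum h {..n}) = sum (enn2real \<circ> h) {..n}" by (rule enn2real_sum) (rule fin)
    then show ?thesis by simp
  qed
  moreover have "exp (- \<theta> * (\<Sum>i\<le>n. enn2real (h i))) = (\<Prod>i\<le>n. exp (- \<theta> * enn2real (h i)))"
    by (simp add: sum_distrib_left exp_sum[symmetric])
  ultimately show ?thesis using False by (auto simp: Psr_def intro!: prod.cong)
qed

locale crnM = crn U \<kappa> y y' z0 \<pi>
  for U :: "'u set" and \<kappa> :: "'u \<Rightarrow> real" and y y' :: "'u \<Rightarrow> 'd::finite \<Rightarrow> nat"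
    and z0 :: "'d \<Rightarrow> nat" and \<pi> :: "('d \<Rightarrow> nat) \<Rightarrow> real" +
  fixes M :: "'w measure" and Y :: "nat \<Rightarrow> 'w \<Rightarrow> ('d \<Rightarrow> nat)" and H :: "nat \<Rightarrow> 'w \<Rightarrow> ennreal"
  assumes PS: "prob_space M" and JH: "ctmc_jump_hold M U \<kappa> y y' z0 Y H"
begin

sublocale P: prob_space M by (rule PS)

lemma Ym[measurable]: "Y n \<in> measurable M (count_space UNIV)"
  using JH by (simp add: ctmc_jump_hold_def)
lemma Hm[measurable]: "H n \<in> borel_measurable M"
  using JH by (simp add: ctmc_jump_hold_def)
lemma formula: "(\<forall>i. 0 \<le> s i) \<Longrightarrow>
         measure M {\<omega>\<in>space M. (\<forall>i\<le>n. Y i \<omega> = x i) \<and> (\<forall>i\<le>n. ennreal (s i) < H i \<omega>)}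
         = (if x 0 = z0 then 1 else 0)
           * (\<Prod>i<n. jump_prob U \<kappa> y y' (x i) (x (Suc i)))
           * (\<Prod>i\<le>n. exp (- q (x i) * s i))"
  using JH by (simp add: ctmc_jump_hold_def)

lemma PSF: "pair_sigma_finite M lborel"
  by (rule pair_sigma_finite.intro[OF prob_space_imp_sigma_finite[OF PS] lborel.sigma_finite_measure_axioms])

lemma jp_nonneg: "0 \<le> jump_prob U \<kappa> y y' a b"
  unfolding jump_prob_def using q_nonneg[of a]
  by (auto intro!: divide_nonneg_nonneg sum_nonneg rate_nonneg_mv)

definition "base n x = (if x 0 = z0 then 1 else 0) * (\<Prod>i<n. jump_prob U \<kappa> y y' (x i) (x (Suc i)))"

lemma base_nonneg: "0 \<le> base n x"
  unfolding base_def by (auto intro!: prod_nonneg jp_nonneg)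

definition "Ev n x C s = {\<omega>\<in>space M. (\<forall>i\<le>n. Y i \<omega> = x i) \<and> (\<forall>i\<in>{..n}-C. ennreal (s i) < H i \<omega>)}"

lemma Ev_sets[measurable]: "Ev n x C s \<in> sets M"
  unfolding Ev_def by measurable

lemma Ev_meas2: "(\<lambda>(\<omega>, \<sigma>::real). indicator (Ev n x C (s(j:=\<sigma>))) \<omega> :: ennreal) \<in> borel_measurable (M \<Otimes>\<^sub>M lborel)"
proof -
  have "(\<lambda>(\<omega>, \<sigma>::real). indicator (Ev n x C (s(j:=\<sigma>))) \<omega> :: ennreal)
     = indicator {p\<in>space (M \<Otimes>\<^sub>M lborel). (\<forall>i\<le>n. Y i (fst p) = x i) \<and> (\<forall>i\<in>{..n}-C. ennreal (if i = j then snd p else s i) < H i (fst p))}"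
    by (auto simp: Ev_def space_pair_measure fun_eq_iff split: split_indicator)
  also have "\<dots> \<in> borel_measurable (M \<Otimes>\<^sub>M lborel)"
    by measurable
  finally show ?thesis .
qed


lemma Ev_upd:
  assumes "j \<le> n" "j \<notin> C"
  shows "(\<omega> \<in> Ev n x C (s(j:=\<sigma>))) = (\<omega> \<in> Ev n x (insert j C) s \<and> ennreal \<sigma> < H j \<omega>)"
proof -
  have d: "{..n}-C = insert j ({..n} - insert j C)" using assms by auto
  have "(\<forall>i\<in>{..n}-C. ennreal ((s(j:=\<sigma>)) i) < H i \<omega>) = (ennreal \<sigma> < H j \<omega> \<and> (\<forall>i\<in>{..n} - insert j C. ennreal (s i) < H i \<omega>))"
    unfolding d by auto
  then show ?thesis unfolding Ev_def by blast
qed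

lemma claim:
  assumes th: "\<theta> > 0"
  shows "finite C \<Longrightarrow> C \<subseteq> {..n} \<Longrightarrow> (\<forall>i. 0 \<le> s i) \<Longrightarrow>
    (\<integral>\<^sup>+\<omega>. (\<Prod>i\<in>C. ennreal (Phr \<theta> (H i \<omega>))) * indicator (Ev n x C s) \<omega> \<partial>M)
    = ennreal (base n x * (\<Prod>i\<in>C. \<theta> / (\<theta> + q (x i))) * (\<Prod>i\<in>{..n}-C. exp (- q (x i) * s i)))"
proof (induction C arbitrary: s rule: finite_induct)
  case empty
  have eq: "Ev n x {} s = {\<omega>\<in>space M. (\<forall>i\<le>n. Y i \<omega> = x i) \<and> (\<forall>i\<le>n. ennreal (s i) < H i \<omega>)}"
    by (auto simp: Ev_def)
  have "(\<integral>\<^sup>+\<omega>. (\<Prod>i\<in>{}. ennreal (Phr \<theta> (H i \<omega>))) * indicator (Ev n x {} s) \<omega> \<partial>M) = emeasure M (Ev n x {} s)"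
    by simp
  also have "\<dots> = ennreal (measure M (Ev n x {} s))" by (rule P.emeasure_eq_measure)
  also have "\<dots> = ennreal (base n x * (\<Prod>i\<le>n. exp (- q (x i) * s i)))"
  proof -
    have "measure M (Ev n x {} s) = (if x 0 = z0 then 1 else 0)
           * (\<Prod>i<n. jump_prob U \<kappa> y y' (x i) (x (Suc i))) * (\<Prod>i\<le>n. exp (- q (x i) * s i))"
      unfolding eq by (rule formula) (rule empty)
    then show ?thesis by (simp only: base_def)
  qed
  finally show ?case by (simp only: prod.empty mult_1_right Diff_empty)
next
  case (insert j C)
  have jn: "j \<le> n" and Cn: "C \<subseteq> {..n}" using insert by auto
  define R where "R = base n x * (\<Prod>i\<in>C. \<theta> / (\<theta> + q (x i))) * (\<Prod>i\<in>{..n}-insert j C. exp (- q (x i) * s i))"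
  have R0: "0 \<le> R" unfolding R_def using th q_nonneg
    by (intro mult_nonneg_nonneg base_nonneg prod_nonneg) (auto intro: add_pos_nonneg less_imp_le)
  define F where "F \<omega> \<sigma> = ennreal (\<theta> * exp (- \<theta> * \<sigma>)) * indicator {0..} \<sigma> *
      ((\<Prod>i\<in>C. ennreal (Phr \<theta> (H i \<omega>))) * indicator (Ev n x C (s(j:=\<sigma>))) \<omega>)" for \<omega> \<sigma>
  have pt: "(\<Prod>i\<in>insert j C. ennreal (Phr \<theta> (H i \<omega>))) * indicator (Ev n x (insert j C) s) \<omega>
      = (\<integral>\<^sup>+\<sigma>. F \<omega> \<sigma> \<partial>lborel)" for \<omega>
  proof -
    have "(\<Prod>i\<in>insert j C. ennreal (Phr \<theta> (H i \<omega>))) * indicator (Ev n x (insert j C) s) \<omega>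
       = ennreal (Phr \<theta> (H j \<omega>)) * ((\<Prod>i\<in>C. ennreal (Phr \<theta> (H i \<omega>))) * indicator (Ev n x (insert j C) s) \<omega>)"
      using insert by (simp add: mult.assoc)
    also have "\<dots> = (\<integral>\<^sup>+\<sigma>. ennreal (\<theta> * exp (- \<theta> * \<sigma>)) * indicator {0..} \<sigma> * indicator {\<sigma>. ennreal \<sigma> < H j \<omega>} \<sigma>
        * ((\<Prod>i\<in>C. ennreal (Phr \<theta> (H i \<omega>))) * indicator (Ev n x (insert j C) s) \<omega>) \<partial>lborel)"
      unfolding Phr_rep[OF th] by (rule nn_integral_multc[symmetric]) measurable
    also have "\<dots> = (\<integral>\<^sup>+\<sigma>. F \<omega> \<sigma> \<partial>lborel)"
    proof (rule nn_integral_cong)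
      fix \<sigma> :: real
      have eq: "indicator {0..} \<sigma> * indicator {\<sigma>. ennreal \<sigma> < H j \<omega>} \<sigma> * indicator (Ev n x (insert j C) s) \<omega>
          = (indicator {0..} \<sigma> * indicator (Ev n x C (s(j:=\<sigma>))) \<omega> :: ennreal)"
      proof (cases "0 \<le> \<sigma>")
        case True
        have "(\<omega> \<in> Ev n x C (s(j:=\<sigma>))) = (\<omega> \<in> Ev n x (insert j C) s \<and> ennreal \<sigma> < H j \<omega>)"
          using Ev_upd[OF jn insert.hyps(2)] .
        then show ?thesis using True
          by (cases "\<omega> \<in> Ev n x (insert j C) s"; cases "ennreal \<sigma> < H j \<omega>") (auto simp: indicator_def)
      qed simp
      let ?e = "ennreal (\<theta> * exp (- \<theta> * \<sigma>))" and ?P = "\<Prod>i\<in>C. ennreal (Phr \<theta> (H i \<omega>))"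
      have "?e * indicator {0..} \<sigma> * indicator {\<sigma>. ennreal \<sigma> < H j \<omega>} \<sigma> * (?P * indicator (Ev n x (insert j C) s) \<omega>)
          = ?e * ?P * (indicator {0..} \<sigma> * indicator {\<sigma>. ennreal \<sigma> < H j \<omega>} \<sigma> * indicator (Ev n x (insert j C) s) \<omega>)"
        by (simp only: mult_ac)
      also have "\<dots> = ?e * ?P * (indicator {0..} \<sigma> * indicator (Ev n x C (s(j:=\<sigma>))) \<omega>)"
        by (simp only: eq)
      also have "\<dots> = F \<omega> \<sigma>" by (simp only: F_def mult_ac)
      finally show "?e * indicator {0..} \<sigma> * indicator {\<sigma>. ennreal \<sigma> < H j \<omega>} \<sigma> * (?P * indicator (Ev n x (insert j C) s) \<omega>) = F \<omega> \<sigma>" .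
    qed
    finally show ?thesis .
  qed
  have Fm: "case_prod F \<in> borel_measurable (M \<Otimes>\<^sub>M lborel)"
  proof -
    have m1: "(\<lambda>p. ennreal (\<theta> * exp (- \<theta> * snd p)) * indicator {0..} (snd p)) \<in> borel_measurable (M \<Otimes>\<^sub>M lborel)"
      by measurable
    have m2: "(\<lambda>p. \<Prod>i\<in>C. ennreal (Phr \<theta> (H i (fst p)))) \<in> borel_measurable (M \<Otimes>\<^sub>M lborel)"
      by measurable
    have m3: "(\<lambda>p. indicator (Ev n x C (s(j:=snd p))) (fst p) :: ennreal) \<in> borel_measurable (M \<Otimes>\<^sub>M lborel)"
      using Ev_meas2[of n x C s j] by (simp add: case_prod_beta')
    have "case_prod F = (\<lambda>p. (ennreal (\<theta> * exp (- \<theta> * snd p)) * indicator {0..} (snd p)) *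
        ((\<Prod>i\<in>C. ennreal (Phr \<theta> (H i (fst p)))) * indicator (Ev n x C (s(j:=snd p))) (fst p)))"
      by (auto simp: F_def fun_eq_iff)
    also have "\<dots> \<in> borel_measurable (M \<Otimes>\<^sub>M lborel)"
      by (intro borel_measurable_times_ennreal m1 m2 m3)
    finally show ?thesis .
  qed
  have "(\<integral>\<^sup>+\<omega>. (\<Prod>i\<in>insert j C. ennreal (Phr \<theta> (H i \<omega>))) * indicator (Ev n x (insert j C) s) \<omega> \<partial>M)
      = (\<integral>\<^sup>+\<omega>. \<integral>\<^sup>+\<sigma>. F \<omega> \<sigma> \<partial>lborel \<partial>M)" by (simp add: pt)
  also have "\<dots> = (\<integral>\<^sup>+\<sigma>. \<integral>\<^sup>+\<omega>. F \<omega> \<sigma> \<partial>M \<partial>lborel)"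
    by (rule pair_sigma_finite.Fubini'[OF PSF Fm, symmetric])
  also have "\<dots> = (\<integral>\<^sup>+\<sigma>. ennreal R * (ennreal (\<theta> * exp (- \<theta> * \<sigma>)) * indicator {0..} \<sigma> * ennreal (exp (- q (x j) * \<sigma>))) \<partial>lborel)"
  proof (rule nn_integral_cong)
    fix \<sigma> :: real
    show "(\<integral>\<^sup>+\<omega>. F \<omega> \<sigma> \<partial>M) = ennreal R * (ennreal (\<theta> * exp (- \<theta> * \<sigma>)) * indicator {0..} \<sigma> * ennreal (exp (- q (x j) * \<sigma>)))"
    proof (cases "0 \<le> \<sigma>")
      case False
      then show ?thesis unfolding F_def by simp
    next
      case True
      have prodeq: "(\<Prod>i\<in>{..n}-C. exp (- q (x i) * (s(j:=\<sigma>)) i)) = exp (- q (x j) * \<sigma>) * (\<Prod>i\<in>{..n}-insert j C. exp (- q (x i) * s i))"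
      proof -
        have "(\<Prod>i\<in>{..n}-C. exp (- q (x i) * (s(j:=\<sigma>)) i)) = exp (- q (x j) * (s(j:=\<sigma>)) j) * (\<Prod>i\<in>{..n}-C-{j}. exp (- q (x i) * (s(j:=\<sigma>)) i))"
          using jn insert.hyps(2) by (intro prod.remove) auto
        also have "{..n}-C-{j} = {..n}-insert j C" by auto
        also have "(\<Prod>i\<in>{..n}-insert j C. exp (- q (x i) * (s(j:=\<sigma>)) i)) = (\<Prod>i\<in>{..n}-insert j C. exp (- q (x i) * s i))"
          by (intro prod.cong) auto
        finally show ?thesis by simp
      qed
      have s': "\<forall>i. 0 \<le> (s(j:=\<sigma>)) i" using insert.prems True by auto
      have "(\<integral>\<^sup>+\<omega>. F \<omega> \<sigma> \<partial>M) = ennreal (\<theta> * exp (- \<theta> * \<sigma>)) * indicator {0..} \<sigma> *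
          (\<integral>\<^sup>+\<omega>. (\<Prod>i\<in>C. ennreal (Phr \<theta> (H i \<omega>))) * indicator (Ev n x C (s(j:=\<sigma>))) \<omega> \<partial>M)"
        unfolding F_def by (rule nn_integral_cmult) measurable
      also have "\<dots> = ennreal (\<theta> * exp (- \<theta> * \<sigma>)) * indicator {0..} \<sigma> *
          ennreal (base n x * (\<Prod>i\<in>C. \<theta> / (\<theta> + q (x i))) * (\<Prod>i\<in>{..n}-C. exp (- q (x i) * (s(j:=\<sigma>)) i)))"
        by (simp only: insert.IH[OF Cn s'])
      also have "\<dots> = ennreal R * (ennreal (\<theta> * exp (- \<theta> * \<sigma>)) * indicator {0..} \<sigma> * ennreal (exp (- q (x j) * \<sigma>)))"
      proof -
        have "base n x * (\<Prod>i\<in>C. \<theta> / (\<theta> + q (x i))) * (exp (- q (x j) * \<sigma>) * (\<Prod>i\<in>{..n}-insert j C. exp (- q (x i) * s i)))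
           = R * exp (- q (x j) * \<sigma>)" by (simp add: R_def mult_ac)
        then show ?thesis unfolding prodeq by (simp only: ennreal_mult'[OF R0] mult_ac)
      qed
      finally show ?thesis .
    qed
  qed
  also have "\<dots> = ennreal R * ennreal (\<theta> / (\<theta> + q (x j)))"
    using exp_int[OF th q_nonneg[of "x j"]] by (subst nn_integral_cmult) auto
  also have "\<dots> = ennreal (R * (\<theta> / (\<theta> + q (x j))))"
    by (rule ennreal_mult'[OF R0, symmetric])
  also have "\<dots> = ennreal (base n x * (\<Prod>i\<in>insert j C. \<theta> / (\<theta> + q (x i))) * (\<Prod>i\<in>{..n}-insert j C. exp (- q (x i) * s i)))"
    using insert.hyps unfolding R_def by (simp add: mult_ac)
  finally show ?case .
qed


definition "E0 n x = Ev n x {} (\<lambda>_. 0)"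

lemma E0_sets[measurable]: "E0 n x \<in> sets M" unfolding E0_def by measurable

lemma claimA:
  assumes th: "\<theta> > 0" and A: "A \<subseteq> {..n}"
  shows "(\<integral>\<^sup>+\<omega>. (\<Prod>i\<in>A. ennreal (Phr \<theta> (H i \<omega>))) * indicator (E0 n x) \<omega> \<partial>M)
       = ennreal (base n x * (\<Prod>i\<in>A. \<theta> / (\<theta> + q (x i))))"
proof -
  have fA: "finite A" using A finite_subset by blast
  have "(\<Prod>i\<in>A. ennreal (Phr \<theta> (H i \<omega>))) * indicator (E0 n x) \<omega>
      = (\<Prod>i\<in>A. ennreal (Phr \<theta> (H i \<omega>))) * indicator (Ev n x A (\<lambda>_. 0)) \<omega>" for \<omega>
  proof (cases "\<omega> \<in> Ev n x A (\<lambda>_. 0)")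
    case True
    show ?thesis
    proof (cases "\<omega> \<in> E0 n x")
      case False
      then obtain i where i: "i \<le> n" "\<not> 0 < H i \<omega>" using True by (auto simp: E0_def Ev_def)
      have "i \<in> A"
      proof (rule ccontr)
        assume "i \<notin> A"
        then have "i \<in> {..n}-A" using i by auto
        then have "0 < H i \<omega>" using True by (auto simp: Ev_def)
        then show False using i by simp
      qed
      moreover have "H i \<omega> = 0" using i by (simp add: not_less)
      ultimately have z: "(\<Prod>i\<in>A. ennreal (Phr \<theta> (H i \<omega>))) = 0"
        using fA by (intro prod_zero) (auto intro!: bexI[of _ i] simp: Phr_0)
      show ?thesis by (simp only: z mult_zero_left)
    qed (use True in simp)
  next
    case False
    then have "\<omega> \<notin> E0 n x" by (auto simp: E0_def Ev_def)
    then show ?thesis using False by simp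
  qed
  then have "(\<integral>\<^sup>+\<omega>. (\<Prod>i\<in>A. ennreal (Phr \<theta> (H i \<omega>))) * indicator (E0 n x) \<omega> \<partial>M)
     = (\<integral>\<^sup>+\<omega>. (\<Prod>i\<in>A. ennreal (Phr \<theta> (H i \<omega>))) * indicator (Ev n x A (\<lambda>_. 0)) \<omega> \<partial>M)" by simp
  also have "\<dots> = ennreal (base n x * (\<Prod>i\<in>A. \<theta> / (\<theta> + q (x i))) * (\<Prod>i\<in>{..n}-A. exp (- q (x i) * 0)))"
    using claim[OF th fA A] by simp
  finally show ?thesis by simp
qed

lemma integral_claimA:
  assumes th: "\<theta> > 0" and A: "A \<subseteq> {..n}"
  shows "(LINT \<omega>|M. (\<Prod>i\<in>A. Phr \<theta> (H i \<omega>)) * indicator (E0 n x) \<omega>) = base n x * (\<Prod>i\<in>A. \<theta> / (\<theta> + q (x i)))"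
proof -
  have "(LINT \<omega>|M. (\<Prod>i\<in>A. Phr \<theta> (H i \<omega>)) * indicator (E0 n x) \<omega>)
      = enn2real (\<integral>\<^sup>+\<omega>. ennreal ((\<Prod>i\<in>A. Phr \<theta> (H i \<omega>)) * indicator (E0 n x) \<omega>) \<partial>M)"
    using Phr_range[OF th] by (intro integral_eq_nn_integral) (auto intro!: AE_I2 mult_nonneg_nonneg prod_nonneg)
  also have "(\<lambda>\<omega>. ennreal ((\<Prod>i\<in>A. Phr \<theta> (H i \<omega>)) * indicator (E0 n x) \<omega>))
      = (\<lambda>\<omega>. (\<Prod>i\<in>A. ennreal (Phr \<theta> (H i \<omega>))) * indicator (E0 n x) \<omega>)"
    using Phr_range[OF th] by (auto simp: fun_eq_iff prod_ennreal prod_nonneg split: split_indicator)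
  also have "enn2real (\<integral>\<^sup>+\<omega>. (\<Prod>i\<in>A. ennreal (Phr \<theta> (H i \<omega>))) * indicator (E0 n x) \<omega> \<partial>M)
      = base n x * (\<Prod>i\<in>A. \<theta> / (\<theta> + q (x i)))"
    unfolding claimA[OF th A] using th q_nonneg
    by (intro enn2real_ennreal mult_nonneg_nonneg base_nonneg prod_nonneg) (auto intro: add_pos_nonneg less_imp_le)
  finally show ?thesis .
qed

lemma lap:
  assumes th: "\<theta> > 0"
  shows "(\<integral>\<^sup>+\<omega>. ennreal ((\<Prod>i\<le>n. Psr \<theta> (H i \<omega>)) * indicator (E0 n x) \<omega>) \<partial>M)
       = ennreal (base n x * (\<Prod>i\<le>n. q (x i) / (q (x i) + \<theta>)))"
proof -
  let ?f = "\<lambda>S \<omega>. (- 1) ^ card S * ((\<Prod>i\<in>S. Phr \<theta> (H i \<omega>)) * indicator (E0 n x) \<omega>)"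
  have pt: "(\<Prod>i\<le>n. Psr \<theta> (H i \<omega>)) * indicator (E0 n x) \<omega> = (\<Sum>S\<in>Pow {..n}. ?f S \<omega>)" for \<omega>
  proof -
    have "(\<Prod>i\<le>n. Psr \<theta> (H i \<omega>)) = (\<Prod>i\<le>n. (- Phr \<theta> (H i \<omega>)) + 1)"
      by (simp add: Phr_Psr)
    also have "\<dots> = (\<Sum>S\<in>Pow {..n}. (\<Prod>i\<in>S. - Phr \<theta> (H i \<omega>)) * (\<Prod>i\<in>{..n}-S. 1))"
      by (rule prod_add) simp
    also have "\<dots> = (\<Sum>S\<in>Pow {..n}. (- 1) ^ card S * (\<Prod>i\<in>S. Phr \<theta> (H i \<omega>)))"
    proof (rule sum.cong)
      fix S assume "S \<in> Pow {..n}"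
      then have "finite S" using finite_subset by auto
      have "(\<Prod>i\<in>S. - Phr \<theta> (H i \<omega>)) = (- 1) ^ card S * (\<Prod>i\<in>S. Phr \<theta> (H i \<omega>))"
        by (rule prod_neg)
      then show "(\<Prod>i\<in>S. - Phr \<theta> (H i \<omega>)) * (\<Prod>i\<in>{..n}-S. 1) = (- 1) ^ card S * (\<Prod>i\<in>S. Phr \<theta> (H i \<omega>))"
        by simp
    qed simp
    finally show ?thesis by (simp add: sum_distrib_right mult.assoc)
  qed
  have intS: "integrable M (?f S)" for S
  proof -
    have "integrable M (\<lambda>\<omega>. (\<Prod>i\<in>S. Phr \<theta> (H i \<omega>)) * indicator (E0 n x) \<omega>)"
    proof (rule P.integrable_const_bound[where B=1])
      show "AE \<omega> in M. norm ((\<Prod>i\<in>S. Phr \<theta> (H i \<omega>)) * indicator (E0 n x) \<omega>) \<le> 1"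
        using Phr_range[OF th]
        by (auto simp: abs_prod prod_nonneg intro!: prod_le_1 split: split_indicator)
    qed measurable
    then show ?thesis by simp
  qed
  have fm: "(\<lambda>\<omega>. (\<Prod>i\<le>n. Psr \<theta> (H i \<omega>)) * indicator (E0 n x) \<omega>) \<in> borel_measurable M" by measurable
  have "integrable M (\<lambda>\<omega>. (\<Prod>i\<le>n. Psr \<theta> (H i \<omega>)) * indicator (E0 n x) \<omega>)"
    unfolding pt using intS by simp
  then have "(\<integral>\<^sup>+\<omega>. ennreal ((\<Prod>i\<le>n. Psr \<theta> (H i \<omega>)) * indicator (E0 n x) \<omega>) \<partial>M)
      = ennreal (LINT \<omega>|M. (\<Prod>i\<le>n. Psr \<theta> (H i \<omega>)) * indicator (E0 n x) \<omega>)"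
    using Psr_range[OF th] by (intro nn_integral_eq_integral) (auto intro!: AE_I2 mult_nonneg_nonneg prod_nonneg)
  also have "(LINT \<omega>|M. (\<Prod>i\<le>n. Psr \<theta> (H i \<omega>)) * indicator (E0 n x) \<omega>) = (\<Sum>S\<in>Pow {..n}. LINT \<omega>|M. ?f S \<omega>)"
    unfolding pt by (rule Bochner_Integration.integral_sum) (rule intS)
  also have "\<dots> = (\<Sum>S\<in>Pow {..n}. (- 1) ^ card S * (base n x * (\<Prod>i\<in>S. \<theta> / (\<theta> + q (x i)))))"
    by (intro sum.cong refl) (simp add: integral_claimA[OF th])
  also have "\<dots> = base n x * (\<Sum>S\<in>Pow {..n}. (\<Prod>i\<in>S. - (\<theta> / (\<theta> + q (x i)))) * (\<Prod>i\<in>{..n}-S. 1))"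
  proof -
    have "(\<Prod>i\<in>S. - (\<theta> / (\<theta> + q (x i)))) = (- 1) ^ card S * (\<Prod>i\<in>S. \<theta> / (\<theta> + q (x i)))" for S
    proof -
      show ?thesis by (rule prod_neg)
    qed
    then show ?thesis by (simp add: sum_distrib_left mult_ac)
  qed
  also have "(\<Sum>S\<in>Pow {..n}. (\<Prod>i\<in>S. - (\<theta> / (\<theta> + q (x i)))) * (\<Prod>i\<in>{..n}-S. 1)) = (\<Prod>i\<le>n. - (\<theta> / (\<theta> + q (x i))) + 1)"
    by (rule prod_add[symmetric]) simp
  also have "(\<Prod>i\<le>n. - (\<theta> / (\<theta> + q (x i))) + 1) = (\<Prod>i\<le>n. q (x i) / (q (x i) + \<theta>))"
  proof (rule prod.cong)
    fix i
    have "\<theta> + q (x i) > 0" using th q_nonneg[of "x i"] by linarith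
    then show "- (\<theta> / (\<theta> + q (x i))) + 1 = q (x i) / (q (x i) + \<theta>)" by (simp add: field_simps)
  qed simp
  finally show ?thesis .
qed


abbreviation "jp a b \<equiv> jump_prob U \<kappa> y y' a b"

lemma Qr_le_q: "Qr a b \<le> q a"
  unfolding Qr_def total_rate_def by (intro sum_mono) (auto intro: rate_nonneg_mv)

lemma jp_Qr: "q a \<noteq> 0 \<Longrightarrow> jp a b = Qr a b / q a"
  unfolding jump_prob_def Qr_def tgt_def using fin_mv by (simp add: sum.inter_filter)

lemma jpK: assumes th: "\<theta> > 0" shows "jp a b * (q a / (q a + \<theta>)) = Qr a b / (q a + \<theta>)"
proof (cases "q a = 0")
  case True
  then have "Qr a b = 0" using Qr_le_q[of a b] Qr_nonneg[of a b] by simp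
  then show ?thesis using True by simp
next
  case False
  then show ?thesis by (simp add: jp_Qr)
qed

lemma jp_rows: "SS (\<lambda>b. ennreal (jp a b)) = 1"
proof (cases "q a = 0")
  case True
  then have "(\<lambda>b. ennreal (jp a b)) = (\<lambda>b. 1 * indicator {a} b)"
    by (auto simp: jump_prob_def fun_eq_iff split: split_indicator)
  then show ?thesis by (simp only: SS_single)
next
  case False
  then have qp: "q a > 0" using q_nonneg[of a] by simp
  have "SS (\<lambda>b. ennreal (jp a b)) = SS (\<lambda>b. ennreal (Qr a b) * ennreal (1 / q a))"
    using False qp Qr_nonneg[of a] by (simp add: jp_Qr ennreal_mult[symmetric])
  also have "\<dots> = ennreal (q a) * ennreal (1 / q a)" by (simp add: nn_integral_multc SS_Qr)
  also have "\<dots> = 1" using qp by (simp add: ennreal_mult[symmetric])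
  finally show ?thesis .
qed

lemma Iter_jp: "Iter (\<lambda>a b. ennreal (jp a b)) (\<lambda>_. 1) n z = 1"
  by (induction n arbitrary: z) (simp_all add: jp_rows)

lemma Wl_jp: "Wl (\<lambda>a b. ennreal (jp a b)) (\<lambda>_. 1) z xs
   = ennreal (\<Prod>i<length xs. jp ((z # xs) ! i) ((z # xs) ! Suc i))"
proof (induction xs arbitrary: z)
  case Nil then show ?case by simp
next
  case (Cons x xs)
  show ?case
    by (simp add: Cons prod.lessThan_Suc_shift ennreal_mult[symmetric] jp_nonneg prod_nonneg del: prod.lessThan_Suc)
qed

lemma Wl_K: assumes th: "\<theta> > 0"
  shows "Wl (Kt \<theta>) (gt \<theta>) z xs
   = ennreal ((\<Prod>i<length xs. jp ((z # xs) ! i) ((z # xs) ! Suc i)) * (\<Prod>i\<le>length xs. q ((z # xs) ! i) / (q ((z # xs) ! i) + \<theta>)))"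
proof (induction xs arbitrary: z)
  case Nil then show ?case by (simp add: gt_def)
next
  case (Cons x xs)
  have qp: "\<And>a. q a + \<theta> > 0" using q_nonneg th by (metis add_nonneg_pos)
  have nn: "0 \<le> (\<Prod>i<length xs. jp ((x # xs) ! i) ((x # xs) ! Suc i)) * (\<Prod>i\<le>length xs. q ((x # xs) ! i) / (q ((x # xs) ! i) + \<theta>))"
    using qp q_nonneg by (intro mult_nonneg_nonneg prod_nonneg jp_nonneg divide_nonneg_pos) auto
  have "Wl (Kt \<theta>) (gt \<theta>) z (x # xs) = ennreal (Qr z x / (q z + \<theta>)) * ennreal ((\<Prod>i<length xs. jp ((x # xs) ! i) ((x # xs) ! Suc i)) * (\<Prod>i\<le>length xs. q ((x # xs) ! i) / (q ((x # xs) ! i) + \<theta>)))"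
    by (simp add: Cons Kt_def)
  also have "\<dots> = ennreal (Qr z x / (q z + \<theta>) * ((\<Prod>i<length xs. jp ((x # xs) ! i) ((x # xs) ! Suc i)) * (\<Prod>i\<le>length xs. q ((x # xs) ! i) / (q ((x # xs) ! i) + \<theta>))))"
    by (rule ennreal_mult''[OF nn, symmetric])
  also have "Qr z x / (q z + \<theta>) = jp z x * (q z / (q z + \<theta>))" by (rule jpK[OF th, symmetric])
  finally show ?case
    by (simp add: prod.lessThan_Suc_shift prod.atMost_Suc_shift mult_ac del: prod.lessThan_Suc prod.atMost_Suc)
qed


definition "Gd n = {\<omega>\<in>space M. Y 0 \<omega> = z0 \<and> (\<forall>i\<le>n. 0 < H i \<omega>)}"
lemma Gd_sets[measurable]: "Gd n \<in> sets M" unfolding Gd_def by measurable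

definition "pth n \<omega> = map (\<lambda>i. Y (Suc i) \<omega>) [0..<n]"

lemma E0_iff: "(length xs = n \<and> \<omega> \<in> E0 n (\<lambda>i. (z0 # xs) ! i)) = (xs = pth n \<omega> \<and> \<omega> \<in> Gd n)"
proof
  assume a: "length xs = n \<and> \<omega> \<in> E0 n (\<lambda>i. (z0 # xs) ! i)"
  then have sp: "\<omega> \<in> space M" and Yi: "\<And>i. i \<le> n \<Longrightarrow> Y i \<omega> = (z0 # xs) ! i" and Hi: "\<And>i. i \<le> n \<Longrightarrow> 0 < H i \<omega>"
    by (auto simp: E0_def Ev_def)
  have "xs = pth n \<omega>"
  proof (rule nth_equalityI)
    show "length xs = length (pth n \<omega>)" using a by (simp add: pth_def)
    fix i assume "i < length xs"
    then show "xs ! i = pth n \<omega> ! i" using Yi[of "Suc i"] a by (simp add: pth_def)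
  qed
  moreover have "\<omega> \<in> Gd n" using sp Yi[of 0] Hi by (simp add: Gd_def)
  ultimately show "xs = pth n \<omega> \<and> \<omega> \<in> Gd n" by simp
next
  assume a: "xs = pth n \<omega> \<and> \<omega> \<in> Gd n"
  have "Y i \<omega> = (z0 # xs) ! i" if "i \<le> n" for i
  proof (cases i)
    case 0 then show ?thesis using a by (simp add: Gd_def)
  next
    case (Suc k) then show ?thesis using a that by (simp add: pth_def)
  qed
  then show "length xs = n \<and> \<omega> \<in> E0 n (\<lambda>i. (z0 # xs) ! i)"
    using a by (auto simp: E0_def Ev_def Gd_def pth_def)
qed

lemma decomp:
  assumes [measurable]: "g \<in> borel_measurable M"
  shows "(\<integral>\<^sup>+\<omega>. g \<omega> * indicator (Gd n) \<omega> \<partial>M)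
    = SS (\<lambda>xs. (if length xs = n then 1 else 0) * (\<integral>\<^sup>+\<omega>. g \<omega> * indicator (E0 n (\<lambda>i. (z0 # xs) ! i)) \<omega> \<partial>M))"
proof -
  have pt: "g \<omega> * indicator (Gd n) \<omega> = SS (\<lambda>xs. (if length xs = n then 1 else 0) * (g \<omega> * indicator (E0 n (\<lambda>i. (z0 # xs) ! i)) \<omega>))" for \<omega>
  proof -
    have "(\<lambda>xs. (if length xs = n then 1 else 0) * (g \<omega> * indicator (E0 n (\<lambda>i. (z0 # xs) ! i)) \<omega>))
        = (\<lambda>xs. (g \<omega> * indicator (Gd n) \<omega>) * indicator {pth n \<omega>} xs)"
    proof
      fix xs
      show "(if length xs = n then 1 else 0) * (g \<omega> * indicator (E0 n (\<lambda>i. (z0 # xs) ! i)) \<omega>)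
          = (g \<omega> * indicator (Gd n) \<omega>) * indicator {pth n \<omega>} xs"
        using E0_iff[of xs n \<omega>] by (auto simp: indicator_def)
    qed
    then show ?thesis by (simp add: SS_single)
  qed
  have "(\<integral>\<^sup>+\<omega>. g \<omega> * indicator (Gd n) \<omega> \<partial>M)
     = (\<integral>\<^sup>+\<omega>. SS (\<lambda>xs. (if length xs = n then 1 else 0) * (g \<omega> * indicator (E0 n (\<lambda>i. (z0 # xs) ! i)) \<omega>)) \<partial>M)"
    by (simp only: pt)
  also have "\<dots> = SS (\<lambda>xs. \<integral>\<^sup>+\<omega>. (if length xs = n then 1 else 0) * (g \<omega> * indicator (E0 n (\<lambda>i. (z0 # xs) ! i)) \<omega>) \<partial>M)"
    by (rule nn_integral_count_space_nn_integral) auto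
  also have "\<dots> = SS (\<lambda>xs. (if length xs = n then 1 else 0) * (\<integral>\<^sup>+\<omega>. g \<omega> * indicator (E0 n (\<lambda>i. (z0 # xs) ! i)) \<omega> \<partial>M))"
    by (intro nn_integral_cong nn_integral_cmult) auto
  finally show ?thesis .
qed

lemma base_path: "length xs = n \<Longrightarrow> base n (\<lambda>i. (z0 # xs) ! i) = (\<Prod>i<length xs. jp ((z0 # xs) ! i) ((z0 # xs) ! Suc i))"
  by (simp add: base_def)

lemma Gd_prob: "emeasure M (Gd n) = 1"
proof -
  have "emeasure M (Gd n) = (\<integral>\<^sup>+\<omega>. 1 * indicator (Gd n) \<omega> \<partial>M)" by simp
  also have "\<dots> = SS (\<lambda>xs. (if length xs = n then 1 else 0) * (\<integral>\<^sup>+\<omega>. 1 * indicator (E0 n (\<lambda>i. (z0 # xs) ! i)) \<omega> \<partial>M))"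
    by (rule decomp) simp
  also have "\<dots> = SS (\<lambda>xs. if length xs = n then Wl (\<lambda>a b. ennreal (jp a b)) (\<lambda>_. 1) z0 xs else 0)"
  proof (rule nn_integral_cong)
    fix xs :: "('d \<Rightarrow> nat) list"
    have "(\<integral>\<^sup>+\<omega>. 1 * indicator (E0 n (\<lambda>i. (z0 # xs) ! i)) \<omega> \<partial>M) = ennreal (base n (\<lambda>i. (z0 # xs) ! i))"
      using claimA[of 1 "{}" n "\<lambda>i. (z0 # xs) ! i"] by simp
    then show "(if length xs = n then 1 else 0) * (\<integral>\<^sup>+\<omega>. 1 * indicator (E0 n (\<lambda>i. (z0 # xs) ! i)) \<omega> \<partial>M)
      = (if length xs = n then Wl (\<lambda>a b. ennreal (jp a b)) (\<lambda>_. 1) z0 xs else 0)"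
      by (simp add: Wl_jp base_path)
  qed
  also have "\<dots> = 1" by (simp add: path_sum Iter_jp)
  finally show ?thesis .
qed

lemma Gd_compl: "emeasure M (space M - Gd n) = 0"
  using Gd_prob P.prob_compl[of "Gd n"] P.emeasure_eq_measure by (simp add: P.emeasure_eq_measure)

lemma lap_total:
  assumes th: "\<theta> > 0"
  shows "(\<integral>\<^sup>+\<omega>. ennreal (\<Prod>i\<le>n. Psr \<theta> (H i \<omega>)) \<partial>M) \<le> Iter (Kt \<theta>) (gt \<theta>) n z0"
proof -
  let ?f = "\<lambda>\<omega>. ennreal (\<Prod>i\<le>n. Psr \<theta> (H i \<omega>))"
  have "(\<integral>\<^sup>+\<omega>. ?f \<omega> \<partial>M) \<le> (\<integral>\<^sup>+\<omega>. ?f \<omega> * indicator (Gd n) \<omega> + indicator (space M - Gd n) \<omega> \<partial>M)"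
  proof (rule nn_integral_mono)
    fix \<omega> assume "\<omega> \<in> space M"
    have "?f \<omega> \<le> 1" using Psr_range[OF th] by (simp add: prod_le_1 prod_nonneg)
    then show "?f \<omega> \<le> ?f \<omega> * indicator (Gd n) \<omega> + indicator (space M - Gd n) \<omega>"
      using \<open>\<omega> \<in> space M\<close> by (auto split: split_indicator)
  qed
  also have "\<dots> = (\<integral>\<^sup>+\<omega>. ?f \<omega> * indicator (Gd n) \<omega> \<partial>M)"
    by (subst nn_integral_add) (auto simp: Gd_compl)
  also have "\<dots> = SS (\<lambda>xs. (if length xs = n then 1 else 0) * (\<integral>\<^sup>+\<omega>. ?f \<omega> * indicator (E0 n (\<lambda>i. (z0 # xs) ! i)) \<omega> \<partial>M))"
    by (rule decomp) measurable
  also have "\<dots> = SS (\<lambda>xs. if length xs = n then Wl (Kt \<theta>) (gt \<theta>) z0 xs else 0)"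
  proof (rule nn_integral_cong)
    fix xs :: "('d \<Rightarrow> nat) list"
    have "(\<integral>\<^sup>+\<omega>. ?f \<omega> * indicator (E0 n (\<lambda>i. (z0 # xs) ! i)) \<omega> \<partial>M)
        = (\<integral>\<^sup>+\<omega>. ennreal ((\<Prod>i\<le>n. Psr \<theta> (H i \<omega>)) * indicator (E0 n (\<lambda>i. (z0 # xs) ! i)) \<omega>) \<partial>M)"
      by (intro nn_integral_cong) (auto split: split_indicator)
    also have "\<dots> = ennreal (base n (\<lambda>i. (z0 # xs) ! i) * (\<Prod>i\<le>n. q ((z0 # xs) ! i) / (q ((z0 # xs) ! i) + \<theta>)))"
      by (rule lap[OF th])
    finally show "(if length xs = n then 1 else 0) * (\<integral>\<^sup>+\<omega>. ?f \<omega> * indicator (E0 n (\<lambda>i. (z0 # xs) ! i)) \<omega> \<partial>M)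
      = (if length xs = n then Wl (Kt \<theta>) (gt \<theta>) z0 xs else 0)"
      by (simp add: Wl_K[OF th] base_path)
  qed
  also have "\<dots> = Iter (Kt \<theta>) (gt \<theta>) n z0" by (rule path_sum)
  finally show ?thesis .
qed


lemma J_meas[measurable]: "(\<lambda>\<omega>. num_jumps H t \<omega>) \<in> borel_measurable M"
  unfolding num_jumps_def by measurable

lemma J_meas2: "(\<lambda>p. num_jumps H (snd p) (fst p)) \<in> borel_measurable (M \<Otimes>\<^sub>M lborel)"
  unfolding num_jumps_def by measurable

lemma J_mono: "t \<le> t' \<Longrightarrow> num_jumps H t \<omega> \<le> num_jumps H t' \<omega>"
  unfolding num_jumps_def
  by (intro suminf_le) (auto intro: order_trans ennreal_leI)

lemma X_mono: "t \<le> t' \<Longrightarrow> (\<integral>\<^sup>+\<omega>. (num_jumps H t \<omega>)\<^sup>2 \<partial>M) \<le> (\<integral>\<^sup>+\<omega>. (num_jumps H t' \<omega>)\<^sup>2 \<partial>M)"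
  by (intro nn_integral_mono power_mono J_mono) auto

lemma J_sq: "(num_jumps H \<sigma> \<omega>)\<^sup>2 = (\<Sum>n. (2 * of_nat n + 1) * (if (\<Sum>i\<le>n. H i \<omega>) \<le> ennreal \<sigma> then 1 else 0))"
  unfolding num_jumps_def
proof (rule sq_count)
  fix n
  assume "(\<Sum>i\<le>Suc n. H i \<omega>) \<le> ennreal \<sigma>"
  moreover have "(\<Sum>i\<le>n. H i \<omega>) \<le> (\<Sum>i\<le>Suc n. H i \<omega>)" by (simp add: add_increasing2)
  ultimately show "(\<Sum>i\<le>n. H i \<omega>) \<le> ennreal \<sigma>" by (rule order_trans[rotated])
qed

lemma laplace_J:
  assumes th: "\<theta> > 0"
  shows "(\<integral>\<^sup>+\<sigma>. \<integral>\<^sup>+\<omega>. ennreal (\<theta> * exp (- \<theta> * \<sigma>)) * indicator {0..} \<sigma> * (num_jumps H \<sigma> \<omega>)\<^sup>2 \<partial>M \<partial>lborel)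
     \<le> (\<Sum>n. (2 * of_nat n + 1) * Iter (Kt \<theta>) (gt \<theta>) n z0)"
proof -
  have m: "(\<lambda>(\<omega>, \<sigma>). ennreal (\<theta> * exp (- \<theta> * \<sigma>)) * indicator {0..} \<sigma> * (num_jumps H \<sigma> \<omega>)\<^sup>2) \<in> borel_measurable (M \<Otimes>\<^sub>M lborel)"
  proof -
    have "(\<lambda>(\<omega>, \<sigma>). ennreal (\<theta> * exp (- \<theta> * \<sigma>)) * indicator {0..} \<sigma> * (num_jumps H \<sigma> \<omega>)\<^sup>2)
       = (\<lambda>p. ennreal (\<theta> * exp (- \<theta> * snd p)) * indicator {0..} (snd p) * (num_jumps H (snd p) (fst p))\<^sup>2)"
      by (auto simp: fun_eq_iff)
    also have "\<dots> \<in> borel_measurable (M \<Otimes>\<^sub>M lborel)"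
      using J_meas2 by measurable
    finally show ?thesis .
  qed
  have "(\<integral>\<^sup>+\<sigma>. \<integral>\<^sup>+\<omega>. ennreal (\<theta> * exp (- \<theta> * \<sigma>)) * indicator {0..} \<sigma> * (num_jumps H \<sigma> \<omega>)\<^sup>2 \<partial>M \<partial>lborel)
      = (\<integral>\<^sup>+\<omega>. \<integral>\<^sup>+\<sigma>. ennreal (\<theta> * exp (- \<theta> * \<sigma>)) * indicator {0..} \<sigma> * (num_jumps H \<sigma> \<omega>)\<^sup>2 \<partial>lborel \<partial>M)"
    by (rule pair_sigma_finite.Fubini'[OF PSF m])
  also have "\<dots> = (\<integral>\<^sup>+\<omega>. (\<Sum>n. (2 * of_nat n + 1) * ennreal (\<Prod>i\<le>n. Psr \<theta> (H i \<omega>))) \<partial>M)"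
  proof (rule nn_integral_cong)
    fix \<omega>
    have "(\<integral>\<^sup>+\<sigma>. ennreal (\<theta> * exp (- \<theta> * \<sigma>)) * indicator {0..} \<sigma> * (num_jumps H \<sigma> \<omega>)\<^sup>2 \<partial>lborel)
       = (\<integral>\<^sup>+\<sigma>. (\<Sum>n. (2 * of_nat n + 1) * (ennreal (\<theta> * exp (- \<theta> * \<sigma>)) * indicator {0..} \<sigma> * (if (\<Sum>i\<le>n. H i \<omega>) \<le> ennreal \<sigma> then 1 else 0))) \<partial>lborel)"
      by (intro nn_integral_cong) (simp add: J_sq mult_ac)
    also have "\<dots> = (\<Sum>n. \<integral>\<^sup>+\<sigma>. (2 * of_nat n + 1) * (ennreal (\<theta> * exp (- \<theta> * \<sigma>)) * indicator {0..} \<sigma> * (if (\<Sum>i\<le>n. H i \<omega>) \<le> ennreal \<sigma> then 1 else 0)) \<partial>lborel)"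
      by (rule nn_integral_suminf) measurable
    also have "\<dots> = (\<Sum>n. (2 * of_nat n + 1) * ennreal (\<Prod>i\<le>n. Psr \<theta> (H i \<omega>)))"
    proof (rule suminf_cong)
      fix n
      show "(\<integral>\<^sup>+\<sigma>. (2 * of_nat n + 1) * (ennreal (\<theta> * exp (- \<theta> * \<sigma>)) * indicator {0..} \<sigma> * (if (\<Sum>i\<le>n. H i \<omega>) \<le> ennreal \<sigma> then 1 else 0)) \<partial>lborel)
          = (2 * of_nat n + 1) * ennreal (\<Prod>i\<le>n. Psr \<theta> (H i \<omega>))"
      proof -
        have "(\<integral>\<^sup>+\<sigma>. (2 * of_nat n + 1) * (ennreal (\<theta> * exp (- \<theta> * \<sigma>)) * indicator {0..} \<sigma> * (if (\<Sum>i\<le>n. H i \<omega>) \<le> ennreal \<sigma> then 1 else 0)) \<partial>lborel)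
          = (2 * of_nat n + 1) * (\<integral>\<^sup>+\<sigma>. ennreal (\<theta> * exp (- \<theta> * \<sigma>)) * indicator {0..} \<sigma> * (if (\<Sum>i\<le>n. H i \<omega>) \<le> ennreal \<sigma> then 1 else 0) \<partial>lborel)"
          by (rule nn_integral_cmult) measurable
        also have "\<dots> = (2 * of_nat n + 1) * ennreal (if (\<Sum>i\<le>n. H i \<omega>) = \<top> then 0 else exp (- \<theta> * enn2real (\<Sum>i\<le>n. H i \<omega>)))"
          by (simp only: exp_S[OF th])
        also have "\<dots> = (2 * of_nat n + 1) * ennreal (\<Prod>i\<le>n. Psr \<theta> (H i \<omega>))"
          by (simp only: Psr_prod_sum)
        finally show ?thesis .
      qed
    qed
    finally show "(\<integral>\<^sup>+\<sigma>. ennreal (\<theta> * exp (- \<theta> * \<sigma>)) * indicator {0..} \<sigma> * (num_jumps H \<sigma> \<omega>)\<^sup>2 \<partial>lborel)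
        = (\<Sum>n. (2 * of_nat n + 1) * ennreal (\<Prod>i\<le>n. Psr \<theta> (H i \<omega>)))" .
  qed
  also have "\<dots> = (\<Sum>n. (2 * of_nat n + 1) * (\<integral>\<^sup>+\<omega>. ennreal (\<Prod>i\<le>n. Psr \<theta> (H i \<omega>)) \<partial>M))"
    by (subst nn_integral_suminf) (auto simp: nn_integral_cmult)
  also have "\<dots> \<le> (\<Sum>n. (2 * of_nat n + 1) * Iter (Kt \<theta>) (gt \<theta>) n z0)"
    by (intro suminf_le mult_left_mono lap_total[OF th]) auto
  finally show ?thesis .
qed


lemma main_bound: "\<exists>c::real. \<forall>t\<ge>0. (\<integral>\<^sup>+\<omega>. (num_jumps H t \<omega>)\<^sup>2 \<partial>M) \<le> ennreal (c * max 1 (t\<^sup>2))"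
proof -
  define B where "B = SS (\<lambda>x. pe x * qe x) + 2 * SS (\<lambda>x. pe x * qe x ^ 2)"
  have Bfin: "B < \<top>" unfolding B_def using A1_fin A2_fin by (simp add: ennreal_mult_less_top)
  define c where "c = enn2real B * exp 1 / \<pi> z0"
  have pz: "\<pi> z0 > 0" by (rule pi_z0_pos)
  show ?thesis
  proof (intro exI[of _ c] allI impI)
    fix t :: real assume t0: "0 \<le> t"
    define T where "T = max 1 t"
    define \<theta> where "\<theta> = 1 / T"
    have T1: "1 \<le> T" and tT: "t \<le> T" unfolding T_def by auto
    have th: "\<theta> > 0" unfolding \<theta>_def using T1 by simp
    have th1: "\<theta> \<le> 1" unfolding \<theta>_def using T1 by simp
    have thT: "\<theta> * T = 1" unfolding \<theta>_def using T1 by simp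
    interpret K: kern "Kt \<theta>" pe "wt \<theta>" qe "dt \<theta>" "gt \<theta>" \<theta> by (rule kern_inst[OF th])
    have IK: "Iter (Kt \<theta>) (gt \<theta>) n z = K.Kp n (gt \<theta>) z" for n z
      by (induction n arbitrary: z) (simp_all add: K.Kp_Suc K.Kop_def)
    let ?X = "\<lambda>t. (\<integral>\<^sup>+\<omega>. (num_jumps H t \<omega>)\<^sup>2 \<partial>M)"
    have s1: "?X t \<le> ?X T" by (rule X_mono[OF tT])
    have et: "(\<integral>\<^sup>+\<sigma>. ennreal (\<theta> * exp (- \<theta> * \<sigma>)) * indicator {T..} \<sigma> \<partial>lborel) = ennreal (exp (- 1))"
      using exp_tail[OF th, of T] thT by simp
    have "ennreal (exp (- 1)) * ?X T = (\<integral>\<^sup>+\<sigma>. ennreal (\<theta> * exp (- \<theta> * \<sigma>)) * indicator {T..} \<sigma> * ?X T \<partial>lborel)"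
      unfolding et[symmetric] by (rule nn_integral_multc[symmetric]) measurable
    also have "\<dots> \<le> (\<integral>\<^sup>+\<sigma>. ennreal (\<theta> * exp (- \<theta> * \<sigma>)) * indicator {0..} \<sigma> * ?X \<sigma> \<partial>lborel)"
    proof (rule nn_integral_mono)
      fix \<sigma> :: real
      show "ennreal (\<theta> * exp (- \<theta> * \<sigma>)) * indicator {T..} \<sigma> * ?X T \<le> ennreal (\<theta> * exp (- \<theta> * \<sigma>)) * indicator {0..} \<sigma> * ?X \<sigma>"
      proof (cases "T \<le> \<sigma>")
        case True
        then have "?X T \<le> ?X \<sigma>" by (rule X_mono)
        then show ?thesis using True T1 by (auto intro: mult_left_mono)
      qed simp
    qed
    also have "\<dots> = (\<integral>\<^sup>+\<sigma>. \<integral>\<^sup>+\<omega>. ennreal (\<theta> * exp (- \<theta> * \<sigma>)) * indicator {0..} \<sigma> * (num_jumps H \<sigma> \<omega>)\<^sup>2 \<partial>M \<partial>lborel)"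
      by (intro nn_integral_cong nn_integral_cmult[symmetric]) measurable
    also have "\<dots> \<le> (\<Sum>n. (2 * of_nat n + 1) * Iter (Kt \<theta>) (gt \<theta>) n z0)"
      by (rule laplace_J[OF th])
    finally have s2: "ennreal (exp (- 1)) * ?X t \<le> (\<Sum>n. (2 * of_nat n + 1) * K.Kp n (gt \<theta>) z0)"
      using s1 by (simp add: IK) (meson dual_order.trans mult_left_mono zero_le)
    have s3: "pe z0 * (\<Sum>n. (2 * of_nat n + 1) * K.Kp n (gt \<theta>) z0) \<le> (\<Sum>n. (2 * of_nat n + 1) * SS (\<lambda>x. pe x * K.Kp n (gt \<theta>) x))"
    proof -
      have "pe z0 * (\<Sum>n. (2 * of_nat n + 1) * K.Kp n (gt \<theta>) z0) = (\<Sum>n. (2 * of_nat n + 1) * (pe z0 * K.Kp n (gt \<theta>) z0))"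
        by (subst ennreal_suminf_cmult[symmetric]) (simp only: mult.left_commute)
      also have "\<dots> \<le> (\<Sum>n. (2 * of_nat n + 1) * SS (\<lambda>x. pe x * K.Kp n (gt \<theta>) x))"
        by (intro suminf_le mult_left_mono nn_integral_ge_point[of z0 UNIV "\<lambda>x. pe x * K.Kp _ (gt \<theta>) x", simplified]) auto
      finally show ?thesis .
    qed
    have s4: "ennreal \<theta> ^ 2 * (\<Sum>n. (2 * of_nat n + 1) * SS (\<lambda>x. pe x * K.Kp n (gt \<theta>) x)) \<le> B"
    proof -
      have "ennreal \<theta> ^ 2 * (\<Sum>n. (2 * of_nat n + 1) * SS (\<lambda>x. pe x * K.Kp n (gt \<theta>) x))
          \<le> ennreal \<theta> * SS (\<lambda>x. pe x * qe x) + 2 * SS (\<lambda>x. pe x * qe x ^ 2)" by (rule K.kern_main)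
      also have "\<dots> \<le> B" unfolding B_def
      proof (intro add_right_mono)
        have "ennreal \<theta> \<le> 1" using th1 by (simp add: ennreal_leI)
        then have "ennreal \<theta> * SS (\<lambda>x. pe x * qe x) \<le> 1 * SS (\<lambda>x. pe x * qe x)" by (rule mult_right_mono) simp
        then show "ennreal \<theta> * SS (\<lambda>x. pe x * qe x) \<le> SS (\<lambda>x. pe x * qe x)" by simp
      qed
      finally show ?thesis .
    qed
    define D where "D = \<theta>^2 * \<pi> z0 * exp (- 1)"
    have D0: "D > 0" unfolding D_def using th pz by simp
    have "ennreal D * ?X t = ennreal \<theta> ^ 2 * (pe z0 * (ennreal (exp (- 1)) * ?X t))"
      unfolding D_def pe_def using th pz
      by (simp add: ennreal_mult'' ennreal_power mult_ac)
    also have "\<dots> \<le> ennreal \<theta> ^ 2 * (pe z0 * (\<Sum>n. (2 * of_nat n + 1) * K.Kp n (gt \<theta>) z0))"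
      by (intro mult_left_mono s2) auto
    also have "\<dots> \<le> ennreal \<theta> ^ 2 * (\<Sum>n. (2 * of_nat n + 1) * SS (\<lambda>x. pe x * K.Kp n (gt \<theta>) x))"
      by (intro mult_left_mono s3) auto
    also have "\<dots> \<le> B" by (rule s4)
    finally have DX: "ennreal D * ?X t \<le> B" .
    have Xfin: "?X t \<noteq> \<top>"
    proof
      assume "?X t = \<top>"
      then have "ennreal D * ?X t = \<top>" using D0 by (simp add: ennreal_mult_top)
      then show False using DX Bfin by (simp add: top_unique)
    qed
    then obtain xv where xv: "?X t = ennreal xv" "0 \<le> xv" by (cases "?X t") auto
    have "ennreal (D * xv) \<le> ennreal (enn2real B)"
      using DX xv Bfin D0 by (simp add: ennreal_mult'' less_top[symmetric])
    then have "D * xv \<le> enn2real B" by (simp add: ennreal_le_iff enn2real_nonneg)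
    then have "xv \<le> enn2real B / D" using D0 by (simp add: field_simps)
    also have "enn2real B / D = c * max 1 (t^2)"
    proof -
      have T2: "T^2 = max 1 (t^2)"
      proof (cases "t \<le> 1")
        case True
        then have "t^2 \<le> 1" using t0 by (simp add: power_le_one)
        then show ?thesis unfolding T_def using True by (simp add: max_def)
      next
        case False
        then have "1 \<le> t^2" using one_le_power[of t 2] by simp
        then show ?thesis unfolding T_def using False by (simp add: max_def)
      qed
      have "exp (- 1::real) * exp 1 = 1" by (simp add: exp_minus)
      have "enn2real B / D = c * T^2" unfolding D_def c_def \<theta>_def using pz T1
        by (simp add: field_simps power2_eq_square exp_minus)
      then show ?thesis by (simp only: T2)
    qed
    finally show "?X t \<le> ennreal (c * max 1 (t\<^sup>2))" using xv by (simp add: ennreal_leI)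
  qed
qed

end


theorem lemma3p2:
  fixes U :: "'u set" and \<kappa> :: "'u \<Rightarrow> real" and y y' :: "'u \<Rightarrow> 'd::finite \<Rightarrow> nat"
    and z0 :: "'d \<Rightarrow> nat" and \<pi> :: "('d \<Rightarrow> nat) \<Rightarrow> real"
    and M :: "'w measure" and Y :: "nat \<Rightarrow> 'w \<Rightarrow> ('d \<Rightarrow> nat)" and H :: "nat \<Rightarrow> 'w \<Rightarrow> ennreal"
  assumes "finite U" and "\<forall>u\<in>U. 0 < \<kappa> u"
    and "prob_space M"
    and "ctmc_jump_hold M U \<kappa> y y' z0 Y H"
    and "\<forall>x x'. (react_step U \<kappa> y y')\<^sup>*\<^sup>* z0 x \<and> (react_step U \<kappa> y y')\<^sup>*\<^sup>* z0 x'
               \<longrightarrow> (react_step U \<kappa> y y')\<^sup>*\<^sup>* x x'"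
    and "ctmc_stationary U \<kappa> y y' {x. (react_step U \<kappa> y y')\<^sup>*\<^sup>* z0 x} \<pi>"
    and "(\<lambda>x. \<Sum>u\<in>U. (ma_rate \<kappa> y u x)\<^sup>2 * \<pi> x) summable_on UNIV"
  shows "\<exists>c::real. \<forall>t\<ge>0. (\<integral>\<^sup>+\<omega>. (num_jumps H t \<omega>)\<^sup>2 \<partial>M) \<le> ennreal (c * max 1 (t\<^sup>2))"
proof -
  interpret crnM U \<kappa> y y' z0 \<pi> M Y H
    using assms by (intro crnM.intro crn.intro crnM_axioms.intro) auto
  show ?thesis by (rule main_bound)
qed

end
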